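(* If a function $f$ is computable by an $M$-memory $(T(n),IO(n))$-time TM-TLM-BT with block size $B$, then there is an $M$-memory $(T(n)+B\cdot IO(n),\,B\cdot IO(n))$-time TM-TLM that computes $f$.
   Context: A Turing machine with two-level memory (TM-TLM) with main memory size $M$ has three tapes: a main memory tape of $M$ cells, an unbounded external memory tape, and an address tape for the external memory. It has a finite state set, alphabets $\Sigma\subseteq\Gamma$ with a blank, an accepting state, and a transition function $\delta: Q\times\Gamma\to Q\times\Gamma\times\{L,S,R\}$ acting on the main memory tape. There are special read and write states: on entering a read state the machine writes an address $addr$ on the address tape and the main memory cell under the head receives the content of external cell $addr$; on entering a write state, external cell $addr$ receives the content of the main memory cell under the head. Each Read/Write is one IO operation of unit cost, after which the head may move L, R or stay. Time = number of transitions other than Read/Write; IO time = number of Read/Write operations. An $M$-memory $(T(n),IO(n))$-time machine has main memory size $M$, time complexity $O(T(n))$ and IO complexity $O(IO(n))$. A TM-TLM-BT (TM-TLM with block transfer) with block size $B$ is defined like a TM-TLM except that $B$ divides $M$, both the main memory and the external memory are partitioned into aligned blocks of $B$ consecutive cells, and each IO operation transfers an entire block: even when a single cell is requested, all $B$ cells of the block containing it are transferred (between the main memory block and the external block), and this counts as one IO operation. *)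

theory Defs
  imports Complex_Main
begin

(* States and tape symbols are natural numbers; the finite state set Q and the finite
   tape alphabet Gamma are explicit finite sets. *)

datatype dir = L | S | R

(* operations on the address tape; the address tape holds a natural number address *)
datatype addrop = AKeep | AInc | ADec

record tlm =
  states :: "nat set"
  gam    :: "nat set"
  q0     :: nat
  qacc   :: nat
  rdst   :: "nat set"
  wrst   :: "nat set"
  delta  :: "nat \<Rightarrow> nat \<Rightarrow> nat \<times> nat \<times> dir"
  aop    :: "nat \<Rightarrow> nat \<Rightarrow> addrop"
  ionext :: "nat \<Rightarrow> nat \<times> dir"   (* successor state and head move after a Read/Write *)

record cfg =
  st  :: nat
  mem :: "nat \<Rightarrow> nat"      (* main memory tape, cells 0..M-1 *)
  hd  :: nat
  ext :: "nat \<Rightarrow> nat"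
  adr :: nat

definition blank :: nat where "blank = 0"

definition well_formed :: "nat set \<Rightarrow> tlm \<Rightarrow> bool" where
  "well_formed \<Sigma> m \<longleftrightarrow>
     finite (states m) \<and> finite (gam m) \<and> blank \<in> gam m \<and> \<Sigma> \<subseteq> gam m - {blank} \<and>
     q0 m \<in> states m \<and> qacc m \<in> states m \<and>
     rdst m \<subseteq> states m \<and> wrst m \<subseteq> states m \<and> rdst m \<inter> wrst m = {} \<and>
     qacc m \<notin> rdst m \<union> wrst m \<and>
     (\<forall>q\<in>states m. \<forall>g\<in>gam m. fst (delta m q g) \<in> states m \<and> fst (snd (delta m q g)) \<in> gam m) \<and>
     (\<forall>q\<in>states m. fst (ionext m q) \<in> states m)"

definition move :: "nat \<Rightarrow> dir \<Rightarrow> nat \<Rightarrow> nat" where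
  "move M d h = (case d of L \<Rightarrow> h - 1 | S \<Rightarrow> h | R \<Rightarrow> min (h + 1) (M - 1))"

definition applyop :: "addrop \<Rightarrow> nat \<Rightarrow> nat" where
  "applyop ao a = (case ao of AKeep \<Rightarrow> a | AInc \<Rightarrow> a + 1 | ADec \<Rightarrow> a - 1)"

(* An IO operation transfers the whole aligned block of B cells containing the requested
   cell; with B = 1 this is exactly the single-cell transfer of a plain TM-TLM. *)
definition step :: "nat \<Rightarrow> nat \<Rightarrow> tlm \<Rightarrow> cfg \<Rightarrow> cfg" where
  "step M B m c =
    (if st c = qacc m then c
     else if st c \<in> rdst m then
       (let (q', d) = ionext m (st c); k = hd c div B; e = adr c div B in
        c\<lparr> st := q',
           mem := (\<lambda>j. if k * B \<le> j \<and> j < k * B + B then ext c (e * B + (j - k * B)) else mem c j),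
           hd := move M d (hd c) \<rparr>)
     else if st c \<in> wrst m then
       (let (q', d) = ionext m (st c); k = hd c div B; e = adr c div B in
        c\<lparr> st := q',
           ext := (\<lambda>j. if e * B \<le> j \<and> j < e * B + B then mem c (k * B + (j - e * B)) else ext c j),
           hd := move M d (hd c) \<rparr>)
     else
       (let (q', g, d) = delta m (st c) (mem c (hd c)) in
        c\<lparr> st := q', mem := (mem c)(hd c := g), hd := move M d (hd c),
           adr := applyop (aop m (st c) (mem c (hd c))) (adr c) \<rparr>))"

definition init :: "tlm \<Rightarrow> nat list \<Rightarrow> cfg" where
  "init m x = \<lparr> st = q0 m, mem = (\<lambda>_. blank), hd = 0,
               ext = (\<lambda>i. if i < length x then x ! i else blank), adr = 0 \<rparr>"

definition run :: "nat \<Rightarrow> nat \<Rightarrow> tlm \<Rightarrow> nat list \<Rightarrow> nat \<Rightarrow> cfg" where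
  "run M B m x t = (step M B m ^^ t) (init m x)"

definition is_io :: "tlm \<Rightarrow> cfg \<Rightarrow> bool" where
  "is_io m c \<longleftrightarrow> st c \<in> rdst m \<union> wrst m"

definition halts_at :: "nat \<Rightarrow> nat \<Rightarrow> tlm \<Rightarrow> nat list \<Rightarrow> nat \<Rightarrow> bool" where
  "halts_at M B m x t \<longleftrightarrow> st (run M B m x t) = qacc m \<and> (\<forall>i<t. st (run M B m x i) \<noteq> qacc m)"

definition time_of :: "nat \<Rightarrow> nat \<Rightarrow> tlm \<Rightarrow> nat list \<Rightarrow> nat \<Rightarrow> nat" where
  "time_of M B m x t = card {i. i < t \<and> \<not> is_io m (run M B m x i)}"

definition io_of :: "nat \<Rightarrow> nat \<Rightarrow> tlm \<Rightarrow> nat list \<Rightarrow> nat \<Rightarrow> nat" where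
  "io_of M B m x t = card {i. i < t \<and> is_io m (run M B m x i)}"

definition output_is :: "cfg \<Rightarrow> nat list \<Rightarrow> bool" where
  "output_is c y \<longleftrightarrow> (\<forall>i<length y. ext c i = y ! i) \<and> ext c (length y) = blank"

definition computes_in :: "nat set \<Rightarrow> nat \<Rightarrow> nat \<Rightarrow> tlm \<Rightarrow> (nat list \<Rightarrow> nat list)
     \<Rightarrow> (nat \<Rightarrow> real) \<Rightarrow> (nat \<Rightarrow> real) \<Rightarrow> bool" where
  "computes_in \<Sigma> M B m f T IO \<longleftrightarrow>
     0 < B \<and> B dvd M \<and> 0 < M \<and> well_formed \<Sigma> m \<and>
     (\<exists>c N. \<forall>x\<in>lists \<Sigma>. \<exists>t. halts_at M B m x t \<and> output_is (run M B m x t) (f x) \<and>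
        (length x \<ge> N \<longrightarrow> real (time_of M B m x t) \<le> c * T (length x)
                        \<and> real (io_of M B m x t) \<le> c * IO (length x)))"

definition tlm_bt_computes :: "nat set \<Rightarrow> nat \<Rightarrow> nat \<Rightarrow> tlm \<Rightarrow> (nat list \<Rightarrow> nat list)
     \<Rightarrow> (nat \<Rightarrow> real) \<Rightarrow> (nat \<Rightarrow> real) \<Rightarrow> bool" where
  "tlm_bt_computes \<Sigma> M B m f T IO \<longleftrightarrow> computes_in \<Sigma> M B m f T IO"

(* M-memory (T,IO)-time TM-TLM computing f: single-cell IO, i.e. block size 1 *)
definition tlm_computes :: "nat set \<Rightarrow> nat \<Rightarrow> tlm \<Rightarrow> (nat list \<Rightarrow> nat list)
     \<Rightarrow> (nat \<Rightarrow> real) \<Rightarrow> (nat \<Rightarrow> real) \<Rightarrow> bool" where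
  "tlm_computes \<Sigma> M m f T IO \<longleftrightarrow> computes_in \<Sigma> M 1 m f T IO"

end

theory Submission
  imports Defs "HOL-Library.Countable_Set"
begin

lemma move_lt: "h < M \<Longrightarrow> 0 < M \<Longrightarrow> move M d h < M"
  by (cases d) (auto simp: move_def)

lemma move_S[simp]: "move M S h = h"
  by (simp add: move_def)

lemma blk_le: fixes h M B :: nat assumes "h < M" "B dvd M" "0 < B" shows "h div B * B + B \<le> M"
proof -
  obtain k where M: "M = B * k" using assms(2) by auto
  have "h div B < k" using assms(1,3) M less_mult_imp_div_less[of h k B] by (simp add: mult.commute)
  then have "h div B * B + B \<le> k * B" by (metis Suc_leI add.commute mult_Suc mult_le_mono1)
  then show ?thesis using M by (simp add: mult.commute)
qed

lemma step_plain:
  assumes "st c \<noteq> qacc m" "st c \<notin> rdst m" "st c \<notin> wrst m"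
  shows "step M B m c = c\<lparr> st := fst (delta m (st c) (mem c (hd c))),
      mem := (mem c)(hd c := fst (snd (delta m (st c) (mem c (hd c))))),
      hd := move M (snd (snd (delta m (st c) (mem c (hd c))))) (hd c),
      adr := applyop (aop m (st c) (mem c (hd c))) (adr c) \<rparr>"
  using assms by (simp add: step_def split: prod.splits)

lemma step_read:
  assumes "st c \<noteq> qacc m" "st c \<in> rdst m"
  shows "step M B m c = c\<lparr> st := fst (ionext m (st c)),
      mem := (\<lambda>j. if hd c div B * B \<le> j \<and> j < hd c div B * B + B
                   then ext c (adr c div B * B + (j - hd c div B * B)) else mem c j),
      hd := move M (snd (ionext m (st c))) (hd c) \<rparr>"
  using assms by (simp add: step_def Let_def split: prod.splits)

lemma step_write:
  assumes "st c \<noteq> qacc m" "st c \<in> wrst m" "st c \<notin> rdst m"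
  shows "step M B m c = c\<lparr> st := fst (ionext m (st c)),
      ext := (\<lambda>j. if adr c div B * B \<le> j \<and> j < adr c div B * B + B
                   then mem c (hd c div B * B + (j - adr c div B * B)) else ext c j),
      hd := move M (snd (ionext m (st c))) (hd c) \<rparr>"
  using assms by (simp add: step_def Let_def split: prod.splits)

lemma step_acc: "st c = qacc m \<Longrightarrow> step M B m c = c"
  by (simp add: step_def)

lemma run_Suc: "run M B m x (Suc t) = step M B m (run M B m x t)"
  by (simp add: run_def)

lemma run_0: "run M B m x 0 = init m x"
  by (simp add: run_def)

locale simloc =
  fixes Sig :: "nat set" and M B :: nat and m :: tlm
  assumes wf: "well_formed Sig m" and Bpos: "0 < B" and Bdvd: "B dvd M" and Mpos: "0 < M"
begin

lemma wfs:
  "finite (states m)" "finite (gam m)" "0 \<in> gam m" "Sig \<subseteq> gam m - {0}"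
  "q0 m \<in> states m" "qacc m \<in> states m" "rdst m \<subseteq> states m" "wrst m \<subseteq> states m"
  "rdst m \<inter> wrst m = {}" "qacc m \<notin> rdst m" "qacc m \<notin> wrst m"
  "\<And>q g. q \<in> states m \<Longrightarrow> g \<in> gam m \<Longrightarrow> fst (delta m q g) \<in> states m"
  "\<And>q g. q \<in> states m \<Longrightarrow> g \<in> gam m \<Longrightarrow> fst (snd (delta m q g)) \<in> gam m"
  "\<And>q. q \<in> states m \<Longrightarrow> fst (ionext m q) \<in> states m"
  using wf unfolding well_formed_def blank_def by auto

definition MemDom :: "(nat \<Rightarrow> nat) set" where
  "MemDom = {f. \<forall>x. (x \<in> {..<M} \<longrightarrow> f x \<in> gam m) \<and> (x \<notin> {..<M} \<longrightarrow> f x = 0)}"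

definition FinDom :: "(nat \<times> (nat \<Rightarrow> nat) \<times> nat) set" where
  "FinDom = states m \<times> MemDom \<times> {..<M}"

lemma finite_MemDom: "finite MemDom"
  unfolding MemDom_def by (rule finite_set_of_finite_funs) (auto simp: wfs)

lemma finite_FinDom: "finite FinDom"
  unfolding FinDom_def using finite_MemDom wfs(1) by auto

definition inv :: "cfg \<Rightarrow> bool" where
  "inv c \<longleftrightarrow> st c \<in> states m \<and> mem c \<in> MemDom \<and> hd c < M \<and> (\<forall>i. ext c i \<in> gam m)"

lemma inv_init: "x \<in> lists Sig \<Longrightarrow> inv (init m x)"
  using wfs(3,4,5) Mpos unfolding inv_def init_def MemDom_def blank_def
  by (auto simp: in_set_conv_nth dest!: nth_mem)

lemma inv_step: assumes "inv c" shows "inv (step M B m c)"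
proof -
  have I: "st c \<in> states m" "mem c \<in> MemDom" "hd c < M" "\<And>i. ext c i \<in> gam m"
    using assms by (auto simp: inv_def)
  have blk: "hd c div B * B + B \<le> M" using blk_le[OF I(3) Bdvd Bpos] .
  show ?thesis
  proof (cases "st c = qacc m")
    case True then show ?thesis using assms by (simp add: step_acc)
  next
    case na: False
    show ?thesis
    proof (cases "st c \<in> rdst m")
      case True
      show ?thesis unfolding step_read[OF na True] inv_def using I blk wfs(14)[OF I(1)]
        by (auto simp: MemDom_def move_lt Mpos)
    next
      case nr: False
      show ?thesis
      proof (cases "st c \<in> wrst m")
        case True
        have "mem c j \<in> gam m" for j using I(2) wfs(3) by (cases "j < M") (auto simp: MemDom_def)
        then show ?thesis unfolding step_write[OF na True nr] inv_def using I wfs(14)[OF I(1)]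
          by (auto simp: move_lt Mpos)
      next
        case False
        have g: "mem c (hd c) \<in> gam m" using I(2,3) by (auto simp: MemDom_def)
        show ?thesis unfolding step_plain[OF na nr False] inv_def using I wfs(12,13)[OF I(1) g]
          by (auto simp: MemDom_def move_lt Mpos)
      qed
    qed
  qed
qed

lemma inv_run: "x \<in> lists Sig \<Longrightarrow> inv (run M B m x t)"
  by (induction t) (auto simp: run_0 run_Suc inv_init inv_step)

definition G :: "nat \<times> (nat \<Rightarrow> nat) \<times> nat \<Rightarrow> nat \<times> (nat \<Rightarrow> nat) \<times> nat" where
  "G y = (case y of (q, mm, h) \<Rightarrow> (fst (delta m q (mm h)), mm(h := fst (snd (delta m q (mm h)))),
                                    move M (snd (snd (delta m q (mm h)))) h))"

definition fin :: "cfg \<Rightarrow> nat \<times> (nat \<Rightarrow> nat) \<times> nat" where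
  "fin c = (st c, mem c, hd c)"

lemma fin_step: "st c \<noteq> qacc m \<Longrightarrow> st c \<notin> rdst m \<Longrightarrow> st c \<notin> wrst m \<Longrightarrow> fin (step M B m c) = G (fin c)"
  by (simp add: step_plain fin_def G_def)

lemma phase_bound:
  assumes x: "x \<in> lists Sig" and H: "halts_at M B m x T" and tn: "t + n \<le> T"
    and pl: "\<And>i. t \<le> i \<Longrightarrow> i < t + n \<Longrightarrow> \<not> is_io m (run M B m x i)"
  shows "n \<le> card FinDom"
proof (rule ccontr)
  assume "\<not> n \<le> card FinDom"
  hence big: "card FinDom < n" by simp
  define y where "y s = fin (run M B m x (t + s))" for s
  have plain: "st (run M B m x (t + i)) \<noteq> qacc m \<and> st (run M B m x (t + i)) \<notin> rdst m
     \<and> st (run M B m x (t + i)) \<notin> wrst m" if "i < n" for i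
    using H that tn pl[of "t+i"] unfolding halts_at_def is_io_def by auto
  have yS: "y (Suc i) = G (y i)" if "i < n" for i
    using plain[OF that] by (simp add: y_def run_Suc fin_step)
  have "y ` {..<n} \<subseteq> FinDom"
    using inv_run[OF x] by (auto simp: y_def fin_def inv_def FinDom_def)
  hence "\<not> inj_on y {..<n}"
    using big card_inj_on_le[of y "{..<n}" FinDom] finite_FinDom by auto
  then obtain i1 i2 where i12: "i1 < i2" "i2 < n" "y i1 = y i2"
    unfolding inj_on_def by (metis lessThan_iff linorder_neqE_nat)
  have cyc: "\<exists>i<i2. y s = y i" for s
  proof (induction s)
    case 0 then show ?case using i12 by (intro exI[of _ 0]) auto
  next
    case (Suc s)
    then obtain i where i: "i < i2" "y s = y i" by auto
    have "st (run M B m x (t + s)) = st (run M B m x (t + i))"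
      using i(2) by (simp add: y_def fin_def)
    hence "y (Suc s) = G (y s)"
      using plain[of i] i12 i by (simp add: y_def run_Suc fin_step)
    also have "\<dots> = y (Suc i)" using yS[of i] i i12 by simp
    finally have e: "y (Suc s) = y (Suc i)" .
    show ?case
    proof (cases "Suc i < i2")
      case True then show ?thesis using e by blast
    next
      case False then have "Suc i = i2" using i by simp
      then show ?thesis using e i12 by (intro exI[of _ i1]) auto
    qed
  qed
  obtain i where i: "i < i2" "y (T - t) = y i" using cyc by blast
  have "st (run M B m x T) = st (run M B m x (t + i))"
    using i(2) tn by (simp add: y_def fin_def)
  then show False using plain[of i] i i12 H by (simp add: halts_at_def)
qed

end

datatype micro = Dc nat | Rd nat | St nat | Pt nat | Wr nat | Ic nat | Bk nat | MT nat
  | Z2 nat | Z3 nat | Z4 nat nat | Z5 nat nat | Z6 nat nat nat | Z7 nat nat nat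
  | Z8 nat nat nat | Z9 nat nat nat | Z10 nat nat nat | Z11 nat nat nat | MD nat | MU nat nat nat

type_synonym base = "nat \<times> (nat \<Rightarrow> nat) \<times> nat \<times> nat"

datatype sst = Acc | Junk | Sim base | Mac base micro

fun mtag :: "micro \<Rightarrow> nat" where
  "mtag (Dc _) = 0" | "mtag (Rd _) = 1" | "mtag (St _) = 2" | "mtag (Pt _) = 3" | "mtag (Wr _) = 4"
| "mtag (Ic _) = 5" | "mtag (Bk _) = 6" | "mtag (MT _) = 7" | "mtag (Z2 _) = 8" | "mtag (Z3 _) = 9"
| "mtag (Z4 _ _) = 10" | "mtag (Z5 _ _) = 11" | "mtag (Z6 _ _ _) = 12" | "mtag (Z7 _ _ _) = 13"
| "mtag (Z8 _ _ _) = 14" | "mtag (Z9 _ _ _) = 15" | "mtag (Z10 _ _ _) = 16" | "mtag (Z11 _ _ _) = 17"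
| "mtag (MD _) = 18" | "mtag (MU _ _ _) = 19"

fun margs :: "micro \<Rightarrow> nat list" where
  "margs (Dc a) = [a]" | "margs (Rd a) = [a]" | "margs (St a) = [a]" | "margs (Pt a) = [a]" | "margs (Wr a) = [a]"
| "margs (Ic a) = [a]" | "margs (Bk a) = [a]" | "margs (MT a) = [a]" | "margs (Z2 a) = [a]" | "margs (Z3 a) = [a]"
| "margs (Z4 a b) = [a, b]" | "margs (Z5 a b) = [a, b]" | "margs (Z6 a b c) = [a, b, c]" | "margs (Z7 a b c) = [a, b, c]"
| "margs (Z8 a b c) = [a, b, c]" | "margs (Z9 a b c) = [a, b, c]" | "margs (Z10 a b c) = [a, b, c]" | "margs (Z11 a b c) = [a, b, c]"
| "margs (MD a) = [a]" | "margs (MU a b c) = [a, b, c]"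

fun munmk :: "nat \<times> nat list \<Rightarrow> micro" where
  "munmk (t, xs) = (let a = xs ! 0; b = xs ! 1; c = xs ! 2 in
     if t = 0 then Dc a else if t = 1 then Rd a else if t = 2 then St a else if t = 3 then Pt a
     else if t = 4 then Wr a else if t = 5 then Ic a else if t = 6 then Bk a else if t = 7 then MT a
     else if t = 8 then Z2 a else if t = 9 then Z3 a else if t = 10 then Z4 a b else if t = 11 then Z5 a b
     else if t = 12 then Z6 a b c else if t = 13 then Z7 a b c else if t = 14 then Z8 a b c
     else if t = 15 then Z9 a b c else if t = 16 then Z10 a b c else if t = 17 then Z11 a b c
     else if t = 18 then MD a else MU a b c)"

lemma munmk_inv: "munmk (mtag \<mu>, margs \<mu>) = \<mu>"
  by (cases \<mu>) simp_all

lemma mtag_le: "mtag \<mu> \<le> 19" by (cases \<mu>) simp_all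
lemma margs_len: "length (margs \<mu>) \<le> 3" by (cases \<mu>) simp_all

lemma finite_micro: "finite {\<mu>. \<forall>a\<in>set (margs \<mu>). a \<le> K}"
proof -
  have "{\<mu>. \<forall>a\<in>set (margs \<mu>). a \<le> K} \<subseteq> munmk ` ({..19} \<times> {xs. set xs \<subseteq> {..K} \<and> length xs \<le> 3})"
  proof
    fix \<mu> assume "\<mu> \<in> {\<mu>. \<forall>a\<in>set (margs \<mu>). a \<le> K}"
    then show "\<mu> \<in> munmk ` ({..19} \<times> {xs. set xs \<subseteq> {..K} \<and> length xs \<le> 3})"
      using munmk_inv[of \<mu>] mtag_le[of \<mu>] margs_len[of \<mu>]
      by (intro image_eqI[of _ _ "(mtag \<mu>, margs \<mu>)"]) auto
  qed
  moreover have "finite ({..19::nat} \<times> {xs. set xs \<subseteq> {..K} \<and> length xs \<le> 3})"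
    by (intro finite_cartesian_product finite_lists_length_le) auto
  ultimately show ?thesis by (meson finite_imageI finite_subset)
qed

definition pick :: "nat \<Rightarrow> nat \<Rightarrow> nat" where
  "pick u s = (if 0 \<noteq> u \<and> 0 \<noteq> s then 0 else if 1 \<noteq> u \<and> 1 \<noteq> s then 1 else 2)"

lemma pick: "pick u s \<noteq> u" "pick u s \<noteq> s" "pick u s \<le> 2"
  by (auto simp: pick_def)

fun isRdm :: "micro \<Rightarrow> bool" where
  "isRdm (Rd _) = True" | "isRdm (Z2 _) = True" | "isRdm (Z4 _ _) = True" | "isRdm (Z9 _ _ _) = True"
| "isRdm _ = False"

fun isWrm :: "micro \<Rightarrow> bool" where
  "isWrm (Wr _) = True" | "isWrm (Z6 _ _ _) = True" | "isWrm (Z11 _ _ _) = True" | "isWrm _ = False"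

fun isRd :: "sst \<Rightarrow> bool" where "isRd (Mac b \<mu>) = isRdm \<mu>" | "isRd _ = False"
fun isWr :: "sst \<Rightarrow> bool" where "isWr (Mac b \<mu>) = isWrm \<mu>" | "isWr _ = False"

lemma isRdWr: "isRd s \<Longrightarrow> \<not> isWr s"
  by (cases s rule: isRd.cases) (auto elim: isRdm.elims)

context simloc
begin

definition Lm :: nat where "Lm = B * (card FinDom + 1)"
definition Xmax :: nat where "Xmax = 2 * Lm + B"
definition gam' :: "nat set" where "gam' = gam m \<union> {0, 1, 2}"
definition K0 :: nat where "K0 = B + Lm + Max gam' + 2"

definition BaseDom :: "base set" where
  "BaseDom = {(q, vm, h, x). q \<in> states m \<and> vm \<in> MemDom \<and> h < M \<and> x \<le> Xmax}"

definition mok :: "micro \<Rightarrow> bool" where "mok \<mu> \<longleftrightarrow> (\<forall>a\<in>set (margs \<mu>). a \<le> K0)"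

definition Dom :: "sst set" where
  "Dom = {Acc, Junk} \<union> Sim ` BaseDom \<union> (\<lambda>(b, \<mu>). Mac b \<mu>) ` (BaseDom \<times> {\<mu>. mok \<mu>})"

lemma Dom_simps[simp]: "Acc \<in> Dom" "Junk \<in> Dom" "Sim b \<in> Dom \<longleftrightarrow> b \<in> BaseDom"
  "Mac b \<mu> \<in> Dom \<longleftrightarrow> b \<in> BaseDom \<and> mok \<mu>"
  by (auto simp: Dom_def)

lemma finite_BaseDom: "finite BaseDom"
proof -
  have "BaseDom \<subseteq> states m \<times> MemDom \<times> {..<M} \<times> {..Xmax}" by (auto simp: BaseDom_def)
  moreover have "finite (states m \<times> MemDom \<times> {..<M} \<times> {..Xmax})"
    using wfs(1) finite_MemDom by auto
  ultimately show ?thesis by (rule finite_subset)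
qed

lemma finite_Dom: "finite Dom"
  unfolding Dom_def mok_def using finite_BaseDom finite_micro by auto

lemma countable_Dom: "countable Dom"
  using finite_Dom by (rule countable_finite)

definition enc :: "sst \<Rightarrow> nat" where "enc = to_nat_on Dom"
definition dec :: "nat \<Rightarrow> sst" where "dec = from_nat_into Dom"

lemma dec_enc[simp]: "s \<in> Dom \<Longrightarrow> dec (enc s) = s"
  by (simp add: enc_def dec_def countable_Dom)

lemma enc_inj: "s \<in> Dom \<Longrightarrow> s' \<in> Dom \<Longrightarrow> enc s = enc s' \<longleftrightarrow> s = s'"
  by (metis dec_enc)

lemma enc_eqD: "enc s = enc s' \<Longrightarrow> s \<in> Dom \<Longrightarrow> s' \<in> Dom \<Longrightarrow> s = s'"
  by (metis dec_enc)

definition mkSim :: "nat \<Rightarrow> (nat \<Rightarrow> nat) \<Rightarrow> nat \<Rightarrow> nat \<Rightarrow> sst" where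
  "mkSim q vm h x = (if q = qacc m then Acc else Sim (q, vm, h, x))"

definition finalst :: "base \<Rightarrow> nat \<Rightarrow> nat \<Rightarrow> sst" where
  "finalst b c f = (case b of (q, vm, h, x) \<Rightarrow>
     mkSim (fst (ionext m q)) vm (move M (snd (ionext m q)) h) (if f = 1 then Lm + x mod B else c))"

fun trm :: "base \<Rightarrow> micro \<Rightarrow> nat \<Rightarrow> sst \<times> nat \<times> addrop" where
  "trm b (Dc (Suc n)) g = (Mac b (Dc n), 0, ADec)"
| "trm (q, vm, h, x) (Dc 0) g = (Mac (q, vm, h, x) (if q \<in> rdst m then Rd 0 else Pt 0), 0, AKeep)"
| "trm (q, vm, h, x) (St j) g = (Mac (q, vm(h div B * B + j := g), h, x)
      (if Suc j < B then Rd (Suc j) else Bk (B - x mod B)), 0, AInc)"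
| "trm (q, vm, h, x) (Pt j) g = (Mac (q, vm, h, x) (Wr j), vm (h div B * B + j), AKeep)"
| "trm (q, vm, h, x) (Ic j) g = (Mac (q, vm, h, x)
      (if Suc j < B then Pt (Suc j) else Bk (B - x mod B)), 0, AInc)"
| "trm b (Bk (Suc n)) g = (Mac b (Bk n), 0, ADec)"
| "trm b (Bk 0) g = (Mac b (MT 0), 0, AKeep)"
| "trm b (MT c) g = (if c < Lm then (Mac b (Z2 c), 0, AInc) else (Mac b (MU Lm Lm 1), 0, AKeep))"
| "trm b (Z3 c) g = (Mac b (Z4 c g), 0, ADec)"
| "trm b (Z5 c u) g = (Mac b (Z6 c g (pick u g)), pick u g, AKeep)"
| "trm b (Z7 c s z) g = (Mac b (Z8 c s z), 0, ADec)"
| "trm b (Z8 c s z) g = (Mac b (Z9 c s z), 0, AInc)"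
| "trm b (Z10 c s z) g = (if g = z then (Mac b (Z11 c s 1), s, AKeep) else (Mac b (Z11 c s 0), s, ADec))"
| "trm b (MD c) g = (Mac b (MT (Suc c)), 0, ADec)"
| "trm b (MU (Suc n) c f) g = (Mac b (MU n c f), 0, AInc)"
| "trm b (MU 0 c f) g = (finalst b c f, 0, AKeep)"
| "trm b _ g = (Junk, 0, AKeep)"

fun ionm :: "base \<Rightarrow> micro \<Rightarrow> sst" where
  "ionm b (Rd j) = Mac b (St j)"
| "ionm b (Wr j) = Mac b (Ic j)"
| "ionm b (Z2 c) = Mac b (Z3 c)"
| "ionm b (Z4 c u) = Mac b (Z5 c u)"
| "ionm b (Z6 c s z) = Mac b (Z7 c s z)"
| "ionm b (Z9 c s z) = Mac b (Z10 c s z)"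
| "ionm b (Z11 c s f) = Mac b (if f = 1 then MD c else MU c c 0)"
| "ionm b _ = Junk"

fun tr :: "sst \<Rightarrow> nat \<Rightarrow> sst \<times> nat \<times> addrop" where
  "tr (Sim (q, vm, h, x)) g = (if q \<in> rdst m \<union> wrst m then (Mac (q, vm, h, x) (Dc (x mod B)), 0, AKeep)
     else (mkSim (fst (delta m q (vm h))) (vm(h := fst (snd (delta m q (vm h)))))
             (move M (snd (snd (delta m q (vm h)))) h) (applyop (aop m q (vm h)) x), 0, aop m q (vm h)))"
| "tr (Mac b \<mu>) g = trm b \<mu> g"
| "tr _ g = (Junk, 0, AKeep)"

fun ion :: "sst \<Rightarrow> sst" where "ion (Mac b \<mu>) = ionm b \<mu>" | "ion _ = Junk"

definition delta' :: "nat \<Rightarrow> nat \<Rightarrow> nat \<times> nat \<times> dir" where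
  "delta' q g = (case tr (dec q) g of (s', w, _) \<Rightarrow>
      if s' \<in> Dom \<and> w \<in> gam' then (enc s', w, S) else (enc Junk, 0, S))"

definition aop' :: "nat \<Rightarrow> nat \<Rightarrow> addrop" where
  "aop' q g = snd (snd (tr (dec q) g))"

definition ionext' :: "nat \<Rightarrow> nat \<times> dir" where
  "ionext' q = (if ion (dec q) \<in> Dom then (enc (ion (dec q)), S) else (enc Junk, S))"

definition m' :: tlm where
  "m' = \<lparr> states = enc ` Dom, gam = gam', q0 = enc (mkSim (q0 m) (\<lambda>_. 0) 0 0), qacc = enc Acc,
          rdst = enc ` {s \<in> Dom. isRd s}, wrst = enc ` {s \<in> Dom. isWr s},
          delta = delta', aop = aop', ionext = ionext' \<rparr>"

lemma finite_gam': "finite gam'" using wfs(2) by (simp add: gam'_def)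

lemma mkSim_Dom: "q \<in> states m \<Longrightarrow> vm \<in> MemDom \<Longrightarrow> h < M \<Longrightarrow> x \<le> Xmax \<Longrightarrow> mkSim q vm h x \<in> Dom"
  by (simp add: mkSim_def BaseDom_def)

lemma zero_MemDom: "(\<lambda>_. 0) \<in> MemDom" using wfs(3) by (simp add: MemDom_def)

lemma rdwr_disj: "enc ` {s \<in> Dom. isRd s} \<inter> enc ` {s \<in> Dom. isWr s} = {}"
proof (rule ccontr)
  assume "\<not> ?thesis"
  then obtain s s' where "s \<in> Dom" "s' \<in> Dom" "isRd s" "isWr s'" "enc s = enc s'" by blast
  then show False using enc_eqD isRdWr by metis
qed

lemma wf': "well_formed Sig m'"
  unfolding well_formed_def m'_def
  using finite_Dom finite_gam' wfs(4,5) mkSim_Dom[OF wfs(5) zero_MemDom Mpos]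
  apply (simp add: blank_def gam'_def delta'_def ionext'_def split: prod.splits)
  apply (intro conjI)
  apply (auto simp: enc_inj)
  using rdwr_disj by blast

end

context simloc
begin

abbreviation stp :: "cfg \<Rightarrow> cfg" where "stp \<equiv> step M 1 m'"

definition reach :: "cfg \<Rightarrow> nat \<Rightarrow> cfg \<Rightarrow> bool" where
  "reach C n C' \<longleftrightarrow> (stp ^^ n) C = C' \<and> (\<forall>i<n. st ((stp ^^ i) C) \<noteq> enc Acc)"

lemma reach_0: "reach C 0 C" by (simp add: reach_def)

lemma fp_add: "(f ^^ (a + b)) x = (f ^^ b) ((f ^^ a) x)"
  using funpow_add[of b a f] by (simp add: add.commute)

lemma reach_trans: assumes "reach C n C'" "reach C' n' C''" shows "reach C (n + n') C''"
proof -
  have e: "(stp ^^ (n + n')) C = (stp ^^ n') ((stp ^^ n) C)" by (rule fp_add)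
  have "st ((stp ^^ i) C) \<noteq> enc Acc" if "i < n + n'" for i
  proof (cases "i < n")
    case True then show ?thesis using assms(1) unfolding reach_def by blast
  next
    case False
    define i' where "i' = i - n"
    have i': "i = n + i'" "i' < n'" using that False by (auto simp: i'_def)
    have "(stp ^^ i) C = (stp ^^ i') C'" using assms(1) unfolding i'(1) reach_def fp_add by simp
    then show ?thesis using assms(2) i'(2) unfolding reach_def by simp
  qed
  then show ?thesis using assms(1,2) e unfolding reach_def by simp
qed

lemma reach_1: "st C \<noteq> enc Acc \<Longrightarrow> reach C 1 (stp C)" by (simp add: reach_def)
lemma m'_simps[simp]: "qacc m' = enc Acc" "rdst m' = enc ` {s \<in> Dom. isRd s}"
  "wrst m' = enc ` {s \<in> Dom. isWr s}" "delta m' = delta'" "aop m' = aop'" "ionext m' = ionext'"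
  by (simp_all add: m'_def)

lemma one_tr:
  assumes "s \<in> Dom" "s \<noteq> Acc" "\<not> isRd s" "\<not> isWr s" "st C = enc s" "hd C = 0"
    "tr s (mem C 0) = (s', w, op)" "s' \<in> Dom" "w \<in> gam'"
  shows "reach C 1 (stp C) \<and> st (stp C) = enc s' \<and> hd (stp C) = 0 \<and> ext (stp C) = ext C
     \<and> adr (stp C) = applyop op (adr C) \<and> mem (stp C) 0 = w"
proof -
  have na: "st C \<noteq> qacc m'" using assms(1,2,5) enc_eqD[of s Acc] by auto
  have nr: "st C \<notin> rdst m'" using assms(1,3,5) enc_eqD[of s] by auto
  have nw: "st C \<notin> wrst m'" using assms(1,4,5) enc_eqD[of s] by auto
  have d: "delta m' (st C) (mem C (hd C)) = (enc s', w, S)" "aop m' (st C) (mem C (hd C)) = op"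
    using assms by (simp_all add: delta'_def aop'_def)
  have r: "reach C 1 (stp C)" using reach_1 na by simp
  show ?thesis using r unfolding step_plain[OF na nr nw] d using assms(6) by simp
qed

lemma one_rd:
  assumes "s \<in> Dom" "isRd s" "st C = enc s" "hd C = 0" "ion s \<in> Dom"
  shows "reach C 1 (stp C) \<and> st (stp C) = enc (ion s) \<and> hd (stp C) = 0 \<and> ext (stp C) = ext C
     \<and> adr (stp C) = adr C \<and> mem (stp C) 0 = ext C (adr C)"
proof -
  have na: "st C \<noteq> qacc m'" using assms(1,2,3) enc_eqD[of s Acc] by auto
  have nr: "st C \<in> rdst m'" using assms(1,2,3) by simp
  have d: "ionext m' (st C) = (enc (ion s), S)"
    using assms by (simp add: ionext'_def)
  have r: "reach C 1 (stp C)" using reach_1 na by simp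
  show ?thesis using r unfolding step_read[OF na nr] d using assms(4) by simp
qed

lemma one_wr:
  assumes "s \<in> Dom" "isWr s" "st C = enc s" "hd C = 0" "ion s \<in> Dom"
  shows "reach C 1 (stp C) \<and> st (stp C) = enc (ion s) \<and> hd (stp C) = 0
     \<and> ext (stp C) = (ext C)(adr C := mem C 0) \<and> adr (stp C) = adr C"
proof -
  have na: "st C \<noteq> qacc m'" using assms(1,2,3) enc_eqD[of s Acc] by auto
  have nr: "st C \<notin> rdst m'" using assms(1,2,3) enc_eqD[of s] isRdWr by auto
  have nw: "st C \<in> wrst m'" using assms(1,2,3) by simp
  have d: "ionext m' (st C) = (enc (ion s), S)"
    using assms by (simp add: ionext'_def)
  have e: "(\<lambda>j. if adr C div 1 * 1 \<le> j \<and> j < adr C div 1 * 1 + 1 then mem C (hd C div 1 * 1 + (j - adr C div 1 * 1)) else ext C j)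
     = (ext C)(adr C := mem C 0)"
    using assms(4) by (auto simp: fun_eq_iff)
  have r: "reach C 1 (stp C)" using reach_1 na by simp
  show ?thesis using r unfolding step_write[OF na nw nr] d e using assms(4) by simp
qed

end

context simloc
begin

lemma gam'_le: "g \<in> gam' \<Longrightarrow> g \<le> Max gam'"
  by (rule Max_ge[OF finite_gam'])

lemma K0_facts: "B \<le> K0" "Lm \<le> K0" "2 \<le> K0" "g \<in> gam' \<Longrightarrow> g \<le> K0" "g \<in> gam m \<Longrightarrow> g \<le> K0"
  using gam'_le[of g] by (auto simp: K0_def gam'_def)

lemma gam_gam': "g \<in> gam m \<Longrightarrow> g \<in> gam'" by (simp add: gam'_def)
lemma zero_gam': "0 \<in> gam'" by (simp add: gam'_def)

lemma mac_tr:
  assumes "b \<in> BaseDom" "mok \<mu>" "\<not> isRdm \<mu>" "\<not> isWrm \<mu>" "st C = enc (Mac b \<mu>)" "hd C = 0"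
    "trm b \<mu> (mem C 0) = (s', w, op)" "s' \<in> Dom" "w \<in> gam'"
  shows "reach C 1 (stp C) \<and> st (stp C) = enc s' \<and> hd (stp C) = 0 \<and> ext (stp C) = ext C
     \<and> adr (stp C) = applyop op (adr C) \<and> mem (stp C) 0 = w"
  by (rule one_tr[where s = "Mac b \<mu>"]) (use assms in auto)

lemma mac_rd:
  assumes "b \<in> BaseDom" "mok \<mu>" "isRdm \<mu>" "st C = enc (Mac b \<mu>)" "hd C = 0" "ionm b \<mu> \<in> Dom"
  shows "reach C 1 (stp C) \<and> st (stp C) = enc (ionm b \<mu>) \<and> hd (stp C) = 0 \<and> ext (stp C) = ext C
     \<and> adr (stp C) = adr C \<and> mem (stp C) 0 = ext C (adr C)"
  using one_rd[where s = "Mac b \<mu>"] assms by auto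

lemma mac_wr:
  assumes "b \<in> BaseDom" "mok \<mu>" "isWrm \<mu>" "st C = enc (Mac b \<mu>)" "hd C = 0" "ionm b \<mu> \<in> Dom"
  shows "reach C 1 (stp C) \<and> st (stp C) = enc (ionm b \<mu>) \<and> hd (stp C) = 0
     \<and> ext (stp C) = (ext C)(adr C := mem C 0) \<and> adr (stp C) = adr C"
  using one_wr[where s = "Mac b \<mu>"] assms by auto

lemma dc_loop:
  assumes "b \<in> BaseDom"
  shows "n \<le> B \<Longrightarrow> st C = enc (Mac b (Dc n)) \<Longrightarrow> hd C = 0 \<Longrightarrow> n \<le> adr C \<Longrightarrow>
    \<exists>C'. reach C n C' \<and> st C' = enc (Mac b (Dc 0)) \<and> hd C' = 0 \<and> ext C' = ext C \<and> adr C' = adr C - n"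
proof (induction n arbitrary: C)
  case 0 then show ?case using reach_0 by auto
next
  case (Suc n)
  have s: "reach C 1 (stp C) \<and> st (stp C) = enc (Mac b (Dc n)) \<and> hd (stp C) = 0 \<and> ext (stp C) = ext C
     \<and> adr (stp C) = applyop ADec (adr C) \<and> mem (stp C) 0 = 0"
    by (rule mac_tr) (use Suc.prems assms K0_facts in \<open>auto simp: mok_def zero_gam'\<close>)
  have "n \<le> adr (stp C)" "n \<le> B" using s Suc.prems by (auto simp: applyop_def)
  then obtain C' where "reach (stp C) n C' \<and> st C' = enc (Mac b (Dc 0)) \<and> hd C' = 0 \<and> ext C' = ext (stp C) \<and> adr C' = adr (stp C) - n"
    using Suc.IH[of "stp C"] s by auto
  then show ?case using s reach_trans[of C 1 "stp C" n C'] by (auto simp: applyop_def)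
qed

lemma bk_loop:
  assumes "b \<in> BaseDom"
  shows "n \<le> B \<Longrightarrow> st C = enc (Mac b (Bk n)) \<Longrightarrow> hd C = 0 \<Longrightarrow> n \<le> adr C \<Longrightarrow>
    \<exists>C'. reach C n C' \<and> st C' = enc (Mac b (Bk 0)) \<and> hd C' = 0 \<and> ext C' = ext C \<and> adr C' = adr C - n"
proof (induction n arbitrary: C)
  case 0 then show ?case using reach_0 by auto
next
  case (Suc n)
  have s: "reach C 1 (stp C) \<and> st (stp C) = enc (Mac b (Bk n)) \<and> hd (stp C) = 0 \<and> ext (stp C) = ext C
     \<and> adr (stp C) = applyop ADec (adr C) \<and> mem (stp C) 0 = 0"
    by (rule mac_tr) (use Suc.prems assms K0_facts in \<open>auto simp: mok_def zero_gam'\<close>)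
  have "n \<le> adr (stp C)" "n \<le> B" using s Suc.prems by (auto simp: applyop_def)
  then obtain C' where "reach (stp C) n C' \<and> st C' = enc (Mac b (Bk 0)) \<and> hd C' = 0 \<and> ext C' = ext (stp C) \<and> adr C' = adr (stp C) - n"
    using Suc.IH[of "stp C"] s by auto
  then show ?case using s reach_trans[of C 1 "stp C" n C'] by (auto simp: applyop_def)
qed

lemma mu_loop:
  assumes "b \<in> BaseDom" "cc \<le> K0" "f \<le> K0"
  shows "n \<le> K0 \<Longrightarrow> st C = enc (Mac b (MU n cc f)) \<Longrightarrow> hd C = 0 \<Longrightarrow>
    \<exists>C'. reach C n C' \<and> st C' = enc (Mac b (MU 0 cc f)) \<and> hd C' = 0 \<and> ext C' = ext C \<and> adr C' = adr C + n"
proof (induction n arbitrary: C)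
  case 0 then show ?case using reach_0 by auto
next
  case (Suc n)
  have s: "reach C 1 (stp C) \<and> st (stp C) = enc (Mac b (MU n cc f)) \<and> hd (stp C) = 0 \<and> ext (stp C) = ext C
     \<and> adr (stp C) = applyop AInc (adr C) \<and> mem (stp C) 0 = 0"
    by (rule mac_tr) (use Suc.prems assms K0_facts in \<open>auto simp: mok_def zero_gam'\<close>)
  have "n \<le> K0" using Suc.prems by simp
  then obtain C' where "reach (stp C) n C' \<and> st C' = enc (Mac b (MU 0 cc f)) \<and> hd C' = 0 \<and> ext C' = ext (stp C) \<and> adr C' = adr (stp C) + n"
    using Suc.IH[of "stp C"] s by auto
  then show ?case using s reach_trans[of C 1 "stp C" n C'] by (auto simp: applyop_def)
qed


lemma MemDom_gam: "vm \<in> MemDom \<Longrightarrow> vm i \<in> gam m"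
  using wfs(3) by (cases "i < M") (auto simp: MemDom_def)

definition vmj :: "(nat \<Rightarrow> nat) \<Rightarrow> nat \<Rightarrow> nat \<Rightarrow> (nat \<Rightarrow> nat) \<Rightarrow> nat \<Rightarrow> nat \<Rightarrow> nat" where
  "vmj vm h A E j = (\<lambda>i. if h div B * B \<le> i \<and> i < h div B * B + j then E (A + (i - h div B * B)) else vm i)"

lemma vmj_0: "vmj vm h A E 0 = vm" by (simp add: vmj_def fun_eq_iff)

lemma vmj_Suc: "(vmj vm h A E j)(h div B * B + j := E (A + j)) = vmj vm h A E (Suc j)"
  by (auto simp: vmj_def fun_eq_iff)

lemma vmj_dom: assumes "(q, vm, h, x) \<in> BaseDom" "\<And>i. E i \<in> gam m" "j \<le> B"
  shows "(q, vmj vm h A E j, h, x) \<in> BaseDom"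
proof -
  have h: "h < M" "vm \<in> MemDom" using assms(1) by (auto simp: BaseDom_def)
  have "h div B * B + B \<le> M" by (rule blk_le[OF h(1) Bdvd Bpos])
  then show ?thesis using assms h unfolding BaseDom_def MemDom_def vmj_def by auto
qed

lemma rd_loop:
  assumes base: "(q, vm, h, x) \<in> BaseDom" and E: "\<And>i. E i \<in> gam m"
  shows "j + d = B \<Longrightarrow> j < B \<Longrightarrow> st C = enc (Mac (q, vmj vm h A E j, h, x) (Rd j)) \<Longrightarrow> hd C = 0
    \<Longrightarrow> ext C = E \<Longrightarrow> adr C = A + j \<Longrightarrow>
    \<exists>C'. reach C (2 * d) C' \<and> st C' = enc (Mac (q, vmj vm h A E B, h, x) (Bk (B - x mod B)))
       \<and> hd C' = 0 \<and> ext C' = E \<and> adr C' = A + B"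
proof (induction d arbitrary: j C)
  case 0 then show ?case by simp
next
  case (Suc d)
  let ?b = "(q, vmj vm h A E j, h, x)"
  have bj: "?b \<in> BaseDom" using vmj_dom[OF base E] Suc.prems by simp
  have s1: "reach C 1 (stp C) \<and> st (stp C) = enc (ionm ?b (Rd j)) \<and> hd (stp C) = 0 \<and> ext (stp C) = ext C
     \<and> adr (stp C) = adr C \<and> mem (stp C) 0 = ext C (adr C)"
    by (rule mac_rd) (use Suc.prems(2-6) bj K0_facts in \<open>auto simp: mok_def\<close>)
  let ?C1 = "stp C"
  let ?b' = "(q, vmj vm h A E (Suc j), h, x)"
  have bj': "?b' \<in> BaseDom" using vmj_dom[OF base E] Suc.prems by simp
  let ?nx = "if Suc j < B then Rd (Suc j) else Bk (B - x mod B)"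
  have r: "x mod B < B" using Bpos by simp
  have s2: "reach ?C1 1 (stp ?C1) \<and> st (stp ?C1) = enc (Mac ?b' ?nx) \<and> hd (stp ?C1) = 0 \<and> ext (stp ?C1) = ext ?C1
     \<and> adr (stp ?C1) = applyop AInc (adr ?C1) \<and> mem (stp ?C1) 0 = 0"
    by (rule mac_tr[where b = ?b and \<mu> = "St j"]) (use Suc.prems(2-6) bj bj' s1 K0_facts r in \<open>auto simp: mok_def zero_gam' vmj_Suc\<close>)
  have r12: "reach C (1 + 1) (stp ?C1)" by (rule reach_trans[of C 1 ?C1 1 "stp ?C1"]) (use s1 s2 in auto)
  show ?case
  proof (cases "Suc j < B")
    case True
    obtain C' where C': "reach (stp ?C1) (2 * d) C' \<and> st C' = enc (Mac (q, vmj vm h A E B, h, x) (Bk (B - x mod B)))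
       \<and> hd C' = 0 \<and> ext C' = E \<and> adr C' = A + B"
      using Suc.IH[of "Suc j" "stp ?C1"] Suc.prems True s1 s2 by (auto simp: applyop_def)
    have e: "1 + 1 + 2 * d = 2 * Suc d" by simp
    have "reach C (2 * Suc d) C'" using reach_trans[OF r12, of "2 * d" C'] C' unfolding e by blast
    then show ?thesis using C' by blast
  next
    case False
    then have "d = 0" "Suc j = B" using Suc.prems by auto
    then show ?thesis using r12 s1 s2 Suc.prems False by (auto simp: applyop_def)
  qed
qed

definition Ej :: "(nat \<Rightarrow> nat) \<Rightarrow> nat \<Rightarrow> nat \<Rightarrow> (nat \<Rightarrow> nat) \<Rightarrow> nat \<Rightarrow> nat \<Rightarrow> nat" where
  "Ej vm h A E j = (\<lambda>i. if A \<le> i \<and> i < A + j then vm (h div B * B + (i - A)) else E i)"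

lemma Ej_0: "Ej vm h A E 0 = E" by (simp add: Ej_def fun_eq_iff)

lemma Ej_Suc: "(Ej vm h A E j)(A + j := vm (h div B * B + j)) = Ej vm h A E (Suc j)"
  by (auto simp: Ej_def fun_eq_iff)

lemma Ej_gam: "vm \<in> MemDom \<Longrightarrow> (\<And>i. E i \<in> gam m) \<Longrightarrow> Ej vm h A E j i \<in> gam m"
  by (auto simp: Ej_def MemDom_gam)

lemma wr_loop:
  assumes base: "(q, vm, h, x) \<in> BaseDom"
  shows "j + d = B \<Longrightarrow> j < B \<Longrightarrow> st C = enc (Mac (q, vm, h, x) (Pt j)) \<Longrightarrow> hd C = 0
    \<Longrightarrow> ext C = Ej vm h A E j \<Longrightarrow> adr C = A + j \<Longrightarrow>
    \<exists>C'. reach C (3 * d) C' \<and> st C' = enc (Mac (q, vm, h, x) (Bk (B - x mod B)))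
       \<and> hd C' = 0 \<and> ext C' = Ej vm h A E B \<and> adr C' = A + B"
proof (induction d arbitrary: j C)
  case 0 then show ?case by simp
next
  case (Suc d)
  let ?b = "(q, vm, h, x)"
  have vmd: "vm \<in> MemDom" using base by (simp add: BaseDom_def)
  have s1: "reach C 1 (stp C) \<and> st (stp C) = enc (Mac ?b (Wr j)) \<and> hd (stp C) = 0 \<and> ext (stp C) = ext C
     \<and> adr (stp C) = applyop AKeep (adr C) \<and> mem (stp C) 0 = vm (h div B * B + j)"
    by (rule mac_tr) (use Suc.prems(2-6) base K0_facts in \<open>auto simp: mok_def gam_gam' MemDom_gam[OF vmd]\<close>)
  let ?C1 = "stp C"
  have s2: "reach ?C1 1 (stp ?C1) \<and> st (stp ?C1) = enc (ionm ?b (Wr j)) \<and> hd (stp ?C1) = 0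
     \<and> ext (stp ?C1) = (ext ?C1)(adr ?C1 := mem ?C1 0) \<and> adr (stp ?C1) = adr ?C1"
    by (rule mac_wr) (use Suc.prems(2-6) base s1 K0_facts in \<open>auto simp: mok_def\<close>)
  let ?C2 = "stp ?C1"
  let ?nx = "if Suc j < B then Pt (Suc j) else Bk (B - x mod B)"
  have r: "x mod B < B" using Bpos by simp
  have s3: "reach ?C2 1 (stp ?C2) \<and> st (stp ?C2) = enc (Mac ?b ?nx) \<and> hd (stp ?C2) = 0 \<and> ext (stp ?C2) = ext ?C2
     \<and> adr (stp ?C2) = applyop AInc (adr ?C2) \<and> mem (stp ?C2) 0 = 0"
    by (rule mac_tr[where b = ?b and \<mu> = "Ic j"]) (use Suc.prems(2-6) base s1 s2 K0_facts r in \<open>auto simp: mok_def zero_gam'\<close>)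
  have r13: "reach C (1 + 1 + 1) (stp ?C2)" by (rule reach_trans[OF reach_trans[of C 1 ?C1 1 ?C2], of 1 "stp ?C2"]) (use s1 s2 s3 in auto)
  have ext3: "ext (stp ?C2) = Ej vm h A E (Suc j)" "adr (stp ?C2) = A + Suc j"
    using s1 s2 s3 Suc.prems by (auto simp: applyop_def Ej_Suc[symmetric])
  show ?case
  proof (cases "Suc j < B")
    case True
    obtain C' where C': "reach (stp ?C2) (3 * d) C' \<and> st C' = enc (Mac ?b (Bk (B - x mod B)))
       \<and> hd C' = 0 \<and> ext C' = Ej vm h A E B \<and> adr C' = A + B"
      using Suc.IH[of "Suc j" "stp ?C2"] Suc.prems True s3 ext3 by auto
    have e: "1 + 1 + 1 + 3 * d = 3 * Suc d" by simp
    have "reach C (3 * Suc d) C'" using reach_trans[OF r13, of "3 * d" C'] C' unfolding e by blast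
    then show ?thesis using C' by blast
  next
    case False
    then have d0: "d = 0" and jb: "Suc j = B" using Suc.prems by auto
    have a: "adr (stp ?C2) = A + B" using ext3(2) jb by simp
    have e: "ext (stp ?C2) = Ej vm h A E B" using ext3(1) jb by simp
    have st: "st (stp ?C2) = enc (Mac ?b (Bk (B - x mod B)))" using s3 False by simp
    have "reach C (3 * Suc d) (stp ?C2)" using r13 d0 by (simp add: numeral_3_eq_3)
    then show ?thesis using a e st s3 by blast
  qed
qed

end

context simloc
begin

lemma reach_step: "reach C n C' \<Longrightarrow> reach C' 1 C'' \<Longrightarrow> reach C (Suc n) C''"
  using reach_trans[of C n C' 1 C''] by simp

lemma zt:
  assumes b: "b \<in> BaseDom" and c: "c < Lm" and E: "\<And>i. E i \<in> gam m"
    and C: "st C = enc (Mac b (MT c))" "hd C = 0" "ext C = E" "adr C = p"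
  shows "(p = 0 \<longrightarrow> (\<exists>n C'. reach C n C' \<and> n \<le> 12 \<and> st C' = enc (Mac b (MU c c 0)) \<and> hd C' = 0 \<and> ext C' = E \<and> adr C' = 0))
       \<and> (p \<noteq> 0 \<longrightarrow> (\<exists>n C'. reach C n C' \<and> n \<le> 12 \<and> st C' = enc (Mac b (MT (Suc c))) \<and> hd C' = 0 \<and> ext C' = E \<and> adr C' = p - 1))"
proof -
  have cK: "c \<le> K0" "Suc c \<le> K0" using c K0_facts by auto
  define u where "u = E (Suc p)"
  define s where "s = E p"
  define z where "z = pick u s"
  have uK: "u \<le> K0" "s \<le> K0" "z \<le> K0" "u \<in> gam'" "s \<in> gam'" "z \<in> gam'"
  proof -
    have "u \<in> gam m" "s \<in> gam m" using E by (auto simp: u_def s_def)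
    moreover have "z \<le> 2" using pick(3) by (simp add: z_def)
    moreover have "z \<in> gam'" using pick(3)[of u s] by (auto simp: z_def gam'_def)
    ultimately show "u \<le> K0" "s \<le> K0" "z \<le> K0" "u \<in> gam'" "s \<in> gam'" "z \<in> gam'"
      using K0_facts(3,5) gam_gam' by (auto intro: order.trans)
  qed
  have zn: "z \<noteq> u" "z \<noteq> s" using pick by (auto simp: z_def)
  define C1 where "C1 = stp C"
  have s1: "reach C 1 C1 \<and> st C1 = enc (Mac b (Z2 c)) \<and> hd C1 = 0 \<and> ext C1 = ext C
     \<and> adr C1 = applyop AInc (adr C) \<and> mem C1 0 = 0"
    unfolding C1_def by (rule mac_tr) (use b c C cK in \<open>auto simp: mok_def zero_gam'\<close>)
  define C2 where "C2 = stp C1"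
  have s2: "reach C1 1 C2 \<and> st C2 = enc (ionm b (Z2 c)) \<and> hd C2 = 0 \<and> ext C2 = ext C1
     \<and> adr C2 = adr C1 \<and> mem C2 0 = ext C1 (adr C1)"
    unfolding C2_def by (rule mac_rd) (use b s1 cK in \<open>auto simp: mok_def\<close>)
  have m2: "mem C2 0 = u" using s1 s2 C by (simp add: u_def applyop_def)
  define C3 where "C3 = stp C2"
  have s3: "reach C2 1 C3 \<and> st C3 = enc (Mac b (Z4 c u)) \<and> hd C3 = 0 \<and> ext C3 = ext C2
     \<and> adr C3 = applyop ADec (adr C2) \<and> mem C3 0 = 0"
    unfolding C3_def by (rule mac_tr) (use b s2 m2 cK uK in \<open>auto simp: mok_def zero_gam'\<close>)
  define C4 where "C4 = stp C3"
  have s4: "reach C3 1 C4 \<and> st C4 = enc (ionm b (Z4 c u)) \<and> hd C4 = 0 \<and> ext C4 = ext C3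
     \<and> adr C4 = adr C3 \<and> mem C4 0 = ext C3 (adr C3)"
    unfolding C4_def by (rule mac_rd) (use b s3 cK uK in \<open>auto simp: mok_def\<close>)
  have a4: "adr C4 = p" "ext C4 = E" using s1 s2 s3 s4 C by (auto simp: applyop_def)
  have m4: "mem C4 0 = s" using s4 a4 s3 by (simp add: s_def)
  define C5 where "C5 = stp C4"
  have s5: "reach C4 1 C5 \<and> st C5 = enc (Mac b (Z6 c s z)) \<and> hd C5 = 0 \<and> ext C5 = ext C4
     \<and> adr C5 = applyop AKeep (adr C4) \<and> mem C5 0 = z"
    unfolding C5_def by (rule mac_tr) (use b s4 m4 cK uK in \<open>auto simp: mok_def z_def\<close>)
  define C6 where "C6 = stp C5"
  have s6: "reach C5 1 C6 \<and> st C6 = enc (ionm b (Z6 c s z)) \<and> hd C6 = 0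
     \<and> ext C6 = (ext C5)(adr C5 := mem C5 0) \<and> adr C6 = adr C5"
    unfolding C6_def by (rule mac_wr) (use b s5 cK uK in \<open>auto simp: mok_def\<close>)
  have a6: "adr C6 = p" "ext C6 = E(p := z)" using s5 s6 a4 by (auto simp: applyop_def)
  define C7 where "C7 = stp C6"
  have s7: "reach C6 1 C7 \<and> st C7 = enc (Mac b (Z8 c s z)) \<and> hd C7 = 0 \<and> ext C7 = ext C6
     \<and> adr C7 = applyop ADec (adr C6) \<and> mem C7 0 = 0"
    unfolding C7_def by (rule mac_tr) (use b s6 cK uK in \<open>auto simp: mok_def zero_gam'\<close>)
  define C8 where "C8 = stp C7"
  have s8: "reach C7 1 C8 \<and> st C8 = enc (Mac b (Z9 c s z)) \<and> hd C8 = 0 \<and> ext C8 = ext C7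
     \<and> adr C8 = applyop AInc (adr C7) \<and> mem C8 0 = 0"
    unfolding C8_def by (rule mac_tr) (use b s7 cK uK in \<open>auto simp: mok_def zero_gam'\<close>)
  have a8: "adr C8 = (if p = 0 then 1 else p)" "ext C8 = E(p := z)"
    using s7 s8 a6 by (auto simp: applyop_def)
  define C9 where "C9 = stp C8"
  have s9: "reach C8 1 C9 \<and> st C9 = enc (ionm b (Z9 c s z)) \<and> hd C9 = 0 \<and> ext C9 = ext C8
     \<and> adr C9 = adr C8 \<and> mem C9 0 = ext C8 (adr C8)"
    unfolding C9_def by (rule mac_rd) (use b s8 cK uK in \<open>auto simp: mok_def\<close>)
  have m9: "mem C9 0 = (if p = 0 then u else z)" using s9 a8 by (simp add: u_def)
  define f where "f = (if p = 0 then 0 else 1::nat)"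
  define C10 where "C10 = stp C9"
  have s10: "reach C9 1 C10 \<and> st C10 = enc (Mac b (Z11 c s f)) \<and> hd C10 = 0 \<and> ext C10 = ext C9
     \<and> adr C10 = applyop (if p = 0 then ADec else AKeep) (adr C9) \<and> mem C10 0 = s"
    unfolding C10_def by (rule mac_tr) (use b s9 m9 zn cK uK in \<open>auto simp: mok_def f_def\<close>)
  define C11 where "C11 = stp C10"
  have s11: "reach C10 1 C11 \<and> st C11 = enc (ionm b (Z11 c s f)) \<and> hd C11 = 0
     \<and> ext C11 = (ext C10)(adr C10 := mem C10 0) \<and> adr C11 = adr C10"
    unfolding C11_def by (rule mac_wr) (use b s10 cK uK in \<open>auto simp: mok_def f_def\<close>)
  have a11: "adr C11 = (if p = 0 then 0 else p)" "ext C11 = E"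
    using s9 s10 s11 a8 by (auto simp: applyop_def s_def fun_eq_iff)
  have r11: "reach C 11 C11"
  proof -
    have "reach C (Suc (Suc (Suc (Suc (Suc (Suc (Suc (Suc (Suc (Suc (Suc 0))))))))))) C11"
      by (rule reach_step[OF reach_step[OF reach_step[OF reach_step[OF reach_step[OF reach_step[OF
          reach_step[OF reach_step[OF reach_step[OF reach_step[OF reach_step[OF reach_0]]]]]]]]]]])
        (use s1 s2 s3 s4 s5 s6 s7 s8 s9 s10 s11 in blast)+
    then show ?thesis by (simp add: eval_nat_numeral)
  qed
  show ?thesis
  proof (intro conjI impI)
    assume p: "p = 0"
    have "st C11 = enc (Mac b (MU c c 0))" using s11 p by (simp add: f_def)
    then show "\<exists>n C'. reach C n C' \<and> n \<le> 12 \<and> st C' = enc (Mac b (MU c c 0)) \<and> hd C' = 0 \<and> ext C' = E \<and> adr C' = 0"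
      using r11 s11 a11 p by (intro exI[of _ 11] exI[of _ C11]) auto
  next
    assume p: "p \<noteq> 0"
    have st11: "st C11 = enc (Mac b (MD c))" using s11 p by (simp add: f_def)
    define C12 where "C12 = stp C11"
    have s12: "reach C11 1 C12 \<and> st C12 = enc (Mac b (MT (Suc c))) \<and> hd C12 = 0 \<and> ext C12 = ext C11
       \<and> adr C12 = applyop ADec (adr C11) \<and> mem C12 0 = 0"
      unfolding C12_def by (rule mac_tr) (use b st11 s11[THEN conjunct2, THEN conjunct2, THEN conjunct1] cK in \<open>auto simp: mok_def zero_gam'\<close>)
    have "reach C 12 C12" using reach_step[OF r11, of C12] s12 by (simp add: eval_nat_numeral)
    then show "\<exists>n C'. reach C n C' \<and> n \<le> 12 \<and> st C' = enc (Mac b (MT (Suc c))) \<and> hd C' = 0 \<and> ext C' = E \<and> adr C' = p - 1"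
      using s12 a11 p by (intro exI[of _ 12] exI[of _ C12]) (auto simp: applyop_def)
  qed
qed


lemma measure:
  assumes b: "b \<in> BaseDom" and E: "\<And>i. E i \<in> gam m"
  shows "Lm - c = d \<Longrightarrow> c \<le> Lm \<Longrightarrow> c \<le> a \<Longrightarrow> st C = enc (Mac b (MT c)) \<Longrightarrow> hd C = 0
    \<Longrightarrow> ext C = E \<Longrightarrow> adr C = a - c \<Longrightarrow>
    \<exists>n C' cc f. reach C n C' \<and> n \<le> 12 * d + 1 \<and> st C' = enc (Mac b (MU cc cc f)) \<and> hd C' = 0
      \<and> ext C' = E \<and> adr C' = a - cc \<and> cc \<le> a \<and> cc \<le> Lm \<and> ((f = 1 \<and> cc = Lm) \<or> (f = 0 \<and> a = cc))"
proof (induction d arbitrary: c C)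
  case 0
  then have cL: "c = Lm" by simp
  have s: "reach C 1 (stp C) \<and> st (stp C) = enc (Mac b (MU Lm Lm 1)) \<and> hd (stp C) = 0 \<and> ext (stp C) = ext C
     \<and> adr (stp C) = applyop AKeep (adr C) \<and> mem (stp C) 0 = 0"
    by (rule mac_tr) (use b 0 cL K0_facts in \<open>auto simp: mok_def zero_gam'\<close>)
  show ?case using s 0 cL by (intro exI[of _ 1] exI[of _ "stp C"] exI[of _ Lm] exI[of _ 1]) (auto simp: applyop_def)
next
  case (Suc d)
  have c: "c < Lm" using Suc.prems by simp
  note z = zt[OF b c E Suc.prems(4,5,6,7)]
  show ?case
  proof (cases "a - c = 0")
    case True
    then obtain n C' where C': "reach C n C' \<and> n \<le> 12 \<and> st C' = enc (Mac b (MU c c 0)) \<and> hd C' = 0 \<and> ext C' = E \<and> adr C' = 0"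
      using z by blast
    have "a = c" using True Suc.prems by simp
    then show ?thesis using C' c by (intro exI[of _ n] exI[of _ C'] exI[of _ c] exI[of _ 0]) auto
  next
    case False
    then obtain n C' where C': "reach C n C' \<and> n \<le> 12 \<and> st C' = enc (Mac b (MT (Suc c))) \<and> hd C' = 0 \<and> ext C' = E \<and> adr C' = a - c - 1"
      using z by blast
    have hh: "Lm - Suc c = d" "Suc c \<le> Lm" "Suc c \<le> a" "adr C' = a - Suc c" using Suc.prems False C' by auto
    have "\<exists>n C'' cc f. reach C' n C'' \<and> n \<le> 12 * d + 1 \<and> st C'' = enc (Mac b (MU cc cc f)) \<and> hd C'' = 0
      \<and> ext C'' = E \<and> adr C'' = a - cc \<and> cc \<le> a \<and> cc \<le> Lm \<and> ((f = 1 \<and> cc = Lm) \<or> (f = 0 \<and> a = cc))"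
      by (rule Suc.IH[of "Suc c" C']) (use hh C' in auto)
    then obtain n2 C2 cc f where C2: "reach C' n2 C2 \<and> n2 \<le> 12 * d + 1 \<and> st C2 = enc (Mac b (MU cc cc f)) \<and> hd C2 = 0
      \<and> ext C2 = E \<and> adr C2 = a - cc \<and> cc \<le> a \<and> cc \<le> Lm \<and> ((f = 1 \<and> cc = Lm) \<or> (f = 0 \<and> a = cc))"
      by blast
    have "reach C (n + n2) C2" using reach_trans C' C2 by blast
    then show ?thesis using C' C2 by (intro exI[of _ "n + n2"] exI[of _ C2] exI[of _ cc] exI[of _ f]) auto
  qed
qed

lemma mu_fin:
  assumes "b \<in> BaseDom" "cc \<le> K0" "f \<le> K0" "st C = enc (Mac b (MU 0 cc f))" "hd C = 0" "finalst b cc f \<in> Dom"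
  shows "reach C 1 (stp C) \<and> st (stp C) = enc (finalst b cc f) \<and> hd (stp C) = 0 \<and> ext (stp C) = ext C
     \<and> adr (stp C) = adr C"
  using mac_tr[of b "MU 0 cc f" C "finalst b cc f" 0 AKeep] assms by (auto simp: mok_def zero_gam' applyop_def)

end

context simloc
begin

definition Rj :: "nat \<Rightarrow> nat \<Rightarrow> nat \<Rightarrow> bool" where
  "Rj j a x \<longleftrightarrow> a = x \<or> (a mod B = x mod B \<and> Lm \<le> a + j \<and> Lm \<le> x + j)"

lemma B_dvd_Lm: "B dvd Lm" by (simp add: Lm_def)

lemma io_macro:
  assumes ic: "inv c" and q: "st c \<in> rdst m \<union> wrst m" and xX: "x \<le> Xmax" and am: "adr c mod B = x mod B"
    and C: "st C = enc (Sim (st c, mem c, hd c, x))" "hd C = 0" "ext C = ext c" "adr C = adr c"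
  shows "\<exists>n C' x'. reach C n C' \<and> n \<le> 5 * B + 13 * Lm + 5 \<and> hd C' = 0
    \<and> ext C' = ext (step M B m c) \<and> adr C' = adr (step M B m c)
    \<and> st C' = enc (mkSim (st (step M B m c)) (mem (step M B m c)) (hd (step M B m c)) x')
    \<and> Rj 0 (adr c) x' \<and> x' \<le> Lm + B"
proof -
  define c' where "c' = step M B m c"
  define qq where "qq = st c"
  define vm where "vm = mem c"
  define h where "h = hd c"
  define a where "a = adr c"
  define r where "r = x mod B"
  define A where "A = a - r"
  define E where "E = ext c"
  define b where "b = (qq, vm, h, x)"
  have qa: "qq \<noteq> qacc m" using q wfs(10,11) by (auto simp: qq_def)
  have icc: "inv c'" using inv_step[OF ic] by (simp add: c'_def)
  have bD: "b \<in> BaseDom" using ic xX by (simp add: b_def BaseDom_def inv_def qq_def vm_def h_def)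
  have rB: "r < B" "r = a mod B" "r \<le> a" using Bpos am by (auto simp: r_def a_def) (metis mod_less_eq_dividend)
  have AA: "A = a div B * B" using rB by (simp add: A_def minus_mod_eq_div_mult)
  have Eg: "\<And>i. E i \<in> gam m" using ic by (simp add: inv_def E_def)
  have vmD: "vm \<in> MemDom" using ic by (simp add: inv_def vm_def)
  have c'1: "st c' = fst (ionext m qq)" "hd c' = move M (snd (ionext m qq)) h" "adr c' = a"
  proof -
    have "st c' = fst (ionext m qq) \<and> hd c' = move M (snd (ionext m qq)) h \<and> adr c' = a"
    proof (cases "qq \<in> rdst m")
      case True then show ?thesis
        using step_read[where c=c and m=m and M=M and B=B, OF qa[unfolded qq_def]]
        by (simp add: c'_def qq_def h_def a_def)
    next
      case False
      then have "st c \<in> wrst m" "st c \<notin> rdst m" using q by (auto simp: qq_def)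
      then show ?thesis
        using step_write[where c=c and m=m and M=M and B=B, OF qa[unfolded qq_def]]
        by (simp add: c'_def qq_def h_def a_def)
    qed
    then show "st c' = fst (ionext m qq)" "hd c' = move M (snd (ionext m qq)) h" "adr c' = a" by auto
  qed
  have c'r: "qq \<in> rdst m \<Longrightarrow> mem c' = vmj vm h A E B \<and> ext c' = E"
    using step_read[where c=c and m=m and M=M and B=B, OF qa[unfolded qq_def]] by (auto simp: c'_def qq_def vm_def h_def E_def vmj_def AA a_def fun_eq_iff)
  have c'w: "qq \<notin> rdst m \<Longrightarrow> mem c' = vm \<and> ext c' = Ej vm h A E B"
    using step_write[where c=c and m=m and M=M and B=B, OF qa[unfolded qq_def]] q
    unfolding qq_def by (auto simp: c'_def qq_def vm_def h_def E_def Ej_def AA a_def fun_eq_iff)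
  define C1 where "C1 = stp C"
  have s1: "reach C 1 C1 \<and> st C1 = enc (Mac b (Dc r)) \<and> hd C1 = 0 \<and> ext C1 = ext C
     \<and> adr C1 = applyop AKeep (adr C) \<and> mem C1 0 = 0"
    unfolding C1_def
    by (rule one_tr[where s = "Sim b"]) (use bD C q rB K0_facts in \<open>auto simp: b_def qq_def vm_def h_def r_def mok_def zero_gam'\<close>)
  obtain C2 where s2: "reach C1 r C2 \<and> st C2 = enc (Mac b (Dc 0)) \<and> hd C2 = 0 \<and> ext C2 = ext C1 \<and> adr C2 = adr C1 - r"
    using dc_loop[OF bD, of r C1] s1 rB C by (auto simp: applyop_def a_def)
  define C3 where "C3 = stp C2"
  have s3: "reach C2 1 C3 \<and> st C3 = enc (Mac b (if qq \<in> rdst m then Rd 0 else Pt 0)) \<and> hd C3 = 0 \<and> ext C3 = ext C2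
     \<and> adr C3 = applyop AKeep (adr C2) \<and> mem C3 0 = 0"
    unfolding C3_def
    by (rule mac_tr) (use bD s2 K0_facts in \<open>auto simp: b_def mok_def zero_gam'\<close>)
  have a3: "adr C3 = A" "ext C3 = E" using s1 s2 s3 C by (auto simp: applyop_def A_def a_def E_def)
  define b4 where "b4 = (qq, mem c', h, x)"
  have b4D: "b4 \<in> BaseDom" using icc ic xX by (simp add: b4_def BaseDom_def inv_def qq_def h_def)
  obtain n4 C4 where s4: "reach C3 n4 C4 \<and> n4 \<le> 3 * B \<and> st C4 = enc (Mac b4 (Bk (B - r))) \<and> hd C4 = 0
      \<and> ext C4 = ext c' \<and> adr C4 = A + B"
  proof (cases "qq \<in> rdst m")
    case True
    have st3: "st C3 = enc (Mac (qq, vmj vm h A E 0, h, x) (Rd 0))" using s3 True by (simp add: vmj_0 b_def)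
    obtain C4 where "reach C3 (2 * B) C4 \<and> st C4 = enc (Mac (qq, vmj vm h A E B, h, x) (Bk (B - x mod B)))
       \<and> hd C4 = 0 \<and> ext C4 = E \<and> adr C4 = A + B"
      using rd_loop[of qq vm h x E 0 B C3 A] bD[unfolded b_def] Eg st3 s3 a3 Bpos by auto
    then show ?thesis using that[of "2 * B" C4] c'r True by (auto simp: b4_def r_def)
  next
    case False
    have st3: "st C3 = enc (Mac (qq, vm, h, x) (Pt 0))" using s3 False by (simp add: b_def)
    obtain C4 where "reach C3 (3 * B) C4 \<and> st C4 = enc (Mac (qq, vm, h, x) (Bk (B - x mod B)))
       \<and> hd C4 = 0 \<and> ext C4 = Ej vm h A E B \<and> adr C4 = A + B"
      using wr_loop[of qq vm h x 0 B C3 A E] bD[unfolded b_def] st3 s3 a3 Bpos by (auto simp: Ej_0)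
    then show ?thesis using that[of "3 * B" C4] c'w False by (auto simp: b4_def r_def)
  qed
  have "\<exists>C5. reach C4 (B - r) C5 \<and> st C5 = enc (Mac b4 (Bk 0)) \<and> hd C5 = 0 \<and> ext C5 = ext C4 \<and> adr C5 = adr C4 - (B - r)"
    by (rule bk_loop[OF b4D]) (use s4 in auto)
  then obtain C5 where s5: "reach C4 (B - r) C5 \<and> st C5 = enc (Mac b4 (Bk 0)) \<and> hd C5 = 0 \<and> ext C5 = ext C4 \<and> adr C5 = adr C4 - (B - r)"
    by blast
  have a5: "adr C5 = a" using s5 s4 rB by (simp add: A_def)
  define C6 where "C6 = stp C5"
  have s6: "reach C5 1 C6 \<and> st C6 = enc (Mac b4 (MT 0)) \<and> hd C6 = 0 \<and> ext C6 = ext C5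
     \<and> adr C6 = applyop AKeep (adr C5) \<and> mem C6 0 = 0"
    unfolding C6_def by (rule mac_tr) (use b4D s5 K0_facts in \<open>auto simp: mok_def zero_gam'\<close>)
  have Eg': "\<And>i. ext c' i \<in> gam m" using icc by (simp add: inv_def)
  have a6: "adr C6 = a - 0" "ext C6 = ext c'" using s6 s5 s4 a5 by (auto simp: applyop_def)
  have "\<exists>n7 C7 cc f. reach C6 n7 C7 \<and> n7 \<le> 12 * Lm + 1 \<and> st C7 = enc (Mac b4 (MU cc cc f)) \<and> hd C7 = 0
      \<and> ext C7 = ext c' \<and> adr C7 = a - cc \<and> cc \<le> a \<and> cc \<le> Lm \<and> ((f = 1 \<and> cc = Lm) \<or> (f = 0 \<and> a = cc))"
    by (rule measure[OF b4D Eg', of 0 Lm a C6]) (use s6 a6 in auto)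
  then obtain n7 C7 cc f where s7: "reach C6 n7 C7 \<and> n7 \<le> 12 * Lm + 1 \<and> st C7 = enc (Mac b4 (MU cc cc f)) \<and> hd C7 = 0
      \<and> ext C7 = ext c' \<and> adr C7 = a - cc \<and> cc \<le> a \<and> cc \<le> Lm \<and> ((f = 1 \<and> cc = Lm) \<or> (f = 0 \<and> a = cc))"
    by blast
  have ccK: "cc \<le> K0" "f \<le> K0" using s7 K0_facts by auto
  have "\<exists>C8. reach C7 cc C8 \<and> st C8 = enc (Mac b4 (MU 0 cc f)) \<and> hd C8 = 0 \<and> ext C8 = ext C7 \<and> adr C8 = adr C7 + cc"
    by (rule mu_loop[OF b4D ccK]) (use s7 ccK in auto)
  then obtain C8 where s8: "reach C7 cc C8 \<and> st C8 = enc (Mac b4 (MU 0 cc f)) \<and> hd C8 = 0 \<and> ext C8 = ext C7 \<and> adr C8 = adr C7 + cc"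
    by blast
  define x' where "x' = (if f = 1 then Lm + x mod B else cc)"
  have x'B: "x' \<le> Lm + B" using s7 Bpos by (auto simp: x'_def less_imp_le)
  have fin: "finalst b4 cc f = mkSim (st c') (mem c') (hd c') x'"
    by (simp add: finalst_def b4_def x'_def c'1 split: prod.splits)
  have finD: "finalst b4 cc f \<in> Dom" unfolding fin
    by (rule mkSim_Dom) (use icc x'B in \<open>auto simp: inv_def Xmax_def\<close>)
  define C9 where "C9 = stp C8"
  have s9: "reach C8 1 C9 \<and> st C9 = enc (finalst b4 cc f) \<and> hd C9 = 0 \<and> ext C9 = ext C8
     \<and> adr C9 = adr C8" unfolding C9_def by (rule mu_fin[OF b4D ccK]) (use s8 finD in auto)
  have R: "Rj 0 a x'"
  proof (cases "f = 1")
    case True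
    then have "cc = Lm" using s7 by auto
    moreover have "(Lm + x mod B) mod B = x mod B" using B_dvd_Lm by (auto simp: mod_add_left_eq[symmetric])
    ultimately show ?thesis using True s7 rB by (auto simp: Rj_def x'_def r_def)
  next
    case False
    then show ?thesis using s7 by (auto simp: Rj_def x'_def)
  qed
  have reachall: "reach C (1 + r + 1 + n4 + (B - r) + 1 + n7 + cc + 1) C9"
    using reach_trans s1 s2 s3 s4 s5 s6 s7 s8 s9 by meson
  have len: "1 + r + 1 + n4 + (B - r) + 1 + n7 + cc + 1 \<le> 5 * B + 13 * Lm + 5"
    using s4 s7 rB by linarith
  have "hd C9 = 0" "ext C9 = ext c'" "adr C9 = adr c'" "st C9 = enc (mkSim (st c') (mem c') (hd c') x')"
    using s9 s8 s7 c'1 fin by auto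
  then show ?thesis using reachall len R x'B unfolding c'_def a_def by blast
qed

end

lemma card_split: fixes a n :: nat shows "card {i. i < a + n \<and> P i} = card {i. i < a \<and> P i} + card {i. i < n \<and> P (a + i)}"
proof -
  have e: "{i. i < a + n \<and> P i} = {i. i < a \<and> P i} \<union> (\<lambda>i. a + i) ` {i. i < n \<and> P (a + i)}"
  proof (rule set_eqI, rule iffI)
    fix i assume i: "i \<in> {i. i < a + n \<and> P i}"
    show "i \<in> {i. i < a \<and> P i} \<union> (\<lambda>i. a + i) ` {i. i < n \<and> P (a + i)}"
    proof (cases "i < a")
      case True then show ?thesis using i by simp
    next
      case False
      then have "i = a + (i - a)" "i - a < n" using i by auto
      then show ?thesis using i by (intro UnI2 image_eqI[of _ _ "i - a"]) auto
    qed
  next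
    fix i assume "i \<in> {i. i < a \<and> P i} \<union> (\<lambda>i. a + i) ` {i. i < n \<and> P (a + i)}"
    then show "i \<in> {i. i < a + n \<and> P i}" by auto
  qed
  have "card ((\<lambda>i. a + i) ` {i. i < n \<and> P (a + i)}) = card {i. i < n \<and> P (a + i)}"
    by (rule card_image) (auto simp: inj_on_def)
  moreover have "{i. i < a \<and> P i} \<inter> (\<lambda>i. a + i) ` {i. i < n \<and> P (a + i)} = {}" by auto
  ultimately show ?thesis unfolding e by (simp add: card_Un_disjoint)
qed

lemma card_le_n: fixes n :: nat shows "card {i. i < n \<and> P i} \<le> n"
  using card_mono[of "{..<n}" "{i. i < n \<and> P i}"] by auto

lemma card_one: "card {i::nat. i < 1 \<and> P i} = (if P 0 then 1 else 0)"
proof -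
  have "{i::nat. i < 1 \<and> P i} = (if P 0 then {0} else {})" by auto
  then show ?thesis by simp
qed

lemma time_Suc: "time_of M B m x (Suc t) = time_of M B m x t + (if is_io m (run M B m x t) then 0 else 1)"
  using card_split[of t 1 "\<lambda>i. \<not> is_io m (run M B m x i)"] card_one[of "\<lambda>i. \<not> is_io m (run M B m x (t + i))"]
  by (simp add: time_of_def)

lemma io_Suc: "io_of M B m x (Suc t) = io_of M B m x t + (if is_io m (run M B m x t) then 1 else 0)"
  using card_split[of t 1 "\<lambda>i. is_io m (run M B m x i)"] card_one[of "\<lambda>i. is_io m (run M B m x (t + i))"]
  by (simp add: io_of_def)

lemma mod_pred: fixes a y B :: nat assumes "a mod B = y mod B" "0 < a" "0 < y"
  shows "(a - 1) mod B = (y - 1) mod B"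
proof (cases "y \<le> a")
  case True
  then have "B dvd a - y" using assms(1) mod_eq_dvd_iff_nat by blast
  moreover have "a - 1 - (y - 1) = a - y" using assms by simp
  ultimately show ?thesis using True assms mod_eq_dvd_iff_nat[of "y - 1" "a - 1" B] by simp
next
  case False
  then have "B dvd y - a" using assms(1) mod_eq_dvd_iff_nat[of a y B] by simp
  moreover have "y - 1 - (a - 1) = y - a" using assms by simp
  ultimately show ?thesis using False assms mod_eq_dvd_iff_nat[of "a - 1" "y - 1" B] by simp
qed

context simloc
begin

lemma Rj_step: "Rj j a y \<Longrightarrow> j < Lm \<Longrightarrow> Rj (Suc j) (applyop op a) (applyop op y)"
proof -
  assume R: "Rj j a y" and j: "j < Lm"
  show ?thesis
  proof (cases "a = y")
    case True then show ?thesis by (simp add: Rj_def)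
  next
    case False
    then have h: "a mod B = y mod B" "Lm \<le> a + j" "Lm \<le> y + j" using R by (auto simp: Rj_def)
    then have pos: "0 < a" "0 < y" using j by auto
    have "(a - 1) mod B = (y - 1) mod B" by (rule mod_pred) (use h pos in auto)
    have inc: "(a + 1) mod B = (y + 1) mod B"
      using h(1) mod_add_left_eq[of a B 1] mod_add_left_eq[of y B 1] by metis
    show ?thesis
    proof (cases op)
      case AKeep then show ?thesis using h by (simp add: Rj_def applyop_def)
    next
      case AInc then show ?thesis using h inc by (simp add: Rj_def applyop_def)
    next
      case ADec then show ?thesis using h pos \<open>(a - 1) mod B = (y - 1) mod B\<close> by (simp add: Rj_def applyop_def)
    qed
  qed
qed

lemma is_io': "st C = enc s \<Longrightarrow> s \<in> Dom \<Longrightarrow> is_io m' C \<longleftrightarrow> isRd s \<or> isWr s"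
  unfolding is_io_def using enc_eqD[of s] by auto

lemma run'_add: "run M 1 m' x (t + n) = (stp ^^ n) (run M 1 m' x t)"
  by (simp add: run_def fp_add)

lemma P_lt_Lm: "card FinDom < Lm"
proof -
  have "1 * (card FinDom + 1) \<le> B * (card FinDom + 1)" using Bpos by (intro mult_right_mono) auto
  then show ?thesis by (simp add: Lm_def)
qed

abbreviation KK :: nat where "KK \<equiv> 5 * B + 13 * Lm + 5"

lemma adr_io_step: "st c \<noteq> qacc m \<Longrightarrow> st c \<in> rdst m \<union> wrst m \<Longrightarrow> adr (step M B m c) = adr c"
  using step_read[where c=c and m=m and M=M and B=B] step_write[where c=c and m=m and M=M and B=B] wfs(9)
  by (cases "st c \<in> rdst m") auto


lemma sim_main:
  assumes xS: "x \<in> lists Sig" and H: "halts_at M B m x T"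
  shows "\<exists>t'. halts_at M 1 m' x t' \<and> ext (run M 1 m' x t') = ext (run M B m x T)
     \<and> time_of M 1 m' x t' \<le> time_of M B m x T + KK * io_of M B m x T
     \<and> io_of M 1 m' x t' \<le> KK * io_of M B m x T"
proof -
  define rn where "rn t = run M B m x t" for t
  define rn' where "rn' t = run M 1 m' x t" for t
  define Rel :: "nat \<Rightarrow> cfg \<Rightarrow> bool" where "Rel t C \<longleftrightarrow> (\<exists>y j. hd C = 0 \<and> ext C = ext (rn t) \<and> adr C = adr (rn t)
     \<and> st C = enc (mkSim (st (rn t)) (mem (rn t)) (hd (rn t)) y) \<and> y \<le> Lm + B + j \<and> j \<le> t
     \<and> (\<forall>i. t - j \<le> i \<longrightarrow> i < t \<longrightarrow> \<not> is_io m (rn i)) \<and> Rj j (adr (rn t)) y)" for t C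
  have nacc: "st (rn t) \<noteq> qacc m" if "t < T" for t using H that by (simp add: halts_at_def rn_def)
  have claim: "t \<le> T \<Longrightarrow> \<exists>t'. Rel t (rn' t') \<and> (\<forall>i<t'. st (rn' i) \<noteq> enc Acc)
     \<and> time_of M 1 m' x t' \<le> time_of M B m x t + KK * io_of M B m x t
     \<and> io_of M 1 m' x t' \<le> KK * io_of M B m x t" for t
  proof (induction t)
    case 0
    have "Rel 0 (rn' 0)"
      unfolding Rel_def rn_def rn'_def run_0
      by (intro exI[of _ 0] exI[of _ 0]) (simp add: init_def m'_def blank_def Rj_def)
    then show ?case by (intro exI[of _ 0]) (simp add: time_of_def io_of_def)
  next
    case (Suc t)
    then have tT: "t < T" by simp
    then obtain t' where IH: "Rel t (rn' t')" "\<forall>i<t'. st (rn' i) \<noteq> enc Acc"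
       "time_of M 1 m' x t' \<le> time_of M B m x t + KK * io_of M B m x t"
       "io_of M 1 m' x t' \<le> KK * io_of M B m x t" using Suc.IH by auto
    define c where "c = rn t"
    define C where "C = rn' t'"
    obtain y j where R: "hd C = 0" "ext C = ext c" "adr C = adr c"
      "st C = enc (mkSim (st c) (mem c) (hd c) y)" "y \<le> Lm + B + j" "j \<le> t"
      "\<And>i. t - j \<le> i \<Longrightarrow> i < t \<Longrightarrow> \<not> is_io m (rn i)" "Rj j (adr c) y"
      using IH(1) unfolding Rel_def c_def C_def by blast
    have na: "st c \<noteq> qacc m" using nacc[OF tT] by (simp add: c_def)
    have stC: "st C = enc (Sim (st c, mem c, hd c, y))" using R(4) na by (simp add: mkSim_def)
    have ic: "inv c" using inv_run[OF xS] by (simp add: c_def rn_def)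
    have ic2: "inv (step M B m c)" using inv_step[OF ic] .
    have rnS: "rn (Suc t) = step M B m c" by (simp add: rn_def c_def run_Suc)
    have jP: "j \<le> card FinDom"
      by (rule phase_bound[OF xS H, of "t - j" j]) (use R(6,7) tT in \<open>auto simp: rn_def\<close>)
    have yX: "y \<le> Xmax" using R(5) jP P_lt_Lm by (simp add: Xmax_def)
    have Cacc: "st C \<noteq> enc Acc" using stC enc_eqD[of "Sim (st c, mem c, hd c, y)" Acc] ic yX
      by (auto simp: BaseDom_def inv_def)
    show ?case
    proof (cases "is_io m c")
      case True
      then have q: "st c \<in> rdst m \<union> wrst m" by (simp add: is_io_def)
      have am: "adr c mod B = y mod B" using R(8) by (auto simp: Rj_def)
      obtain n C' x' where M: "reach C n C'" "n \<le> KK" "hd C' = 0"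
        "ext C' = ext (step M B m c)" "adr C' = adr (step M B m c)"
        "st C' = enc (mkSim (st (step M B m c)) (mem (step M B m c)) (hd (step M B m c)) x')"
        "Rj 0 (adr c) x'" "x' \<le> Lm + B"
        using io_macro[OF ic q yX am stC R(1,2,3)] by blast
      have rn'n: "rn' (t' + n) = C'" using M(1) run'_add[of x t' n] unfolding reach_def C_def rn'_def by simp
      have ad: "adr (step M B m c) = adr c" using adr_io_step[OF na q] .
      have "Rel (Suc t) (rn' (t' + n))"
        unfolding Rel_def rn'n rnS by (rule exI[of _ x'], rule exI[of _ 0]) (use M ad in auto)
      moreover have "\<forall>i<t' + n. st (rn' i) \<noteq> enc Acc"
      proof (intro allI impI)
        fix i assume i: "i < t' + n"
        show "st (rn' i) \<noteq> enc Acc"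
        proof (cases "i < t'")
          case True then show ?thesis using IH(2) by simp
        next
          case False
          then have "rn' i = (stp ^^ (i - t')) C" using run'_add[of x t' "i - t'"]
            by (simp add: rn'_def C_def)
          then show ?thesis using M(1) i False unfolding reach_def by auto
        qed
      qed
      moreover have "time_of M 1 m' x (t' + n) \<le> time_of M 1 m' x t' + KK"
      proof -
        have "time_of M 1 m' x (t' + n) = time_of M 1 m' x t' + card {i. i < n \<and> \<not> is_io m' (run M 1 m' x (t' + i))}"
          unfolding time_of_def by (rule card_split)
        moreover have "card {i. i < n \<and> \<not> is_io m' (run M 1 m' x (t' + i))} \<le> n" by (rule card_le_n)
        ultimately show ?thesis using M(2) by linarith
      qed
      moreover have "io_of M 1 m' x (t' + n) \<le> io_of M 1 m' x t' + KK"
      proof -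
        have "io_of M 1 m' x (t' + n) = io_of M 1 m' x t' + card {i. i < n \<and> is_io m' (run M 1 m' x (t' + i))}"
          unfolding io_of_def by (rule card_split)
        moreover have "card {i. i < n \<and> is_io m' (run M 1 m' x (t' + i))} \<le> n" by (rule card_le_n)
        ultimately show ?thesis using M(2) by linarith
      qed
      moreover have "time_of M B m x (Suc t) = time_of M B m x t" "io_of M B m x (Suc t) = io_of M B m x t + 1"
        using True by (simp_all add: time_Suc io_Suc c_def rn_def)
      ultimately show ?thesis using IH(3,4) by (intro exI[of _ "t' + n"]) auto
    next
      case False
      then have np: "st c \<notin> rdst m" "st c \<notin> wrst m" by (auto simp: is_io_def)
      define g where "g = mem c (hd c)"
      define c2 where "c2 = step M B m c"
      have c2: "st c2 = fst (delta m (st c) g)" "mem c2 = (mem c)(hd c := fst (snd (delta m (st c) g)))"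
        "hd c2 = move M (snd (snd (delta m (st c) g))) (hd c)" "adr c2 = applyop (aop m (st c) g) (adr c)"
        "ext c2 = ext c"
        using step_plain[where c=c and m=m and M=M and B=B, OF na np] by (simp_all add: c2_def g_def)
      define y' where "y' = applyop (aop m (st c) g) y"
      have jP1: "Suc j \<le> card FinDom"
        by (rule phase_bound[OF xS H, of "t - j" "Suc j"]) (use R(6,7) tT False in \<open>auto simp: rn_def c_def less_Suc_eq\<close>)
      have y'X: "y' \<le> Lm + B + Suc j" using R(5) by (cases "aop m (st c) g") (auto simp: y'_def applyop_def)
      have y'D: "y' \<le> Xmax" using y'X jP1 P_lt_Lm by (simp add: Xmax_def)
      have ic2': "inv c2" using ic2 by (simp add: c2_def)
      have trv: "tr (Sim (st c, mem c, hd c, y)) (mem C 0) = (mkSim (st c2) (mem c2) (hd c2) y', 0, aop m (st c) g)"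
        using np c2 by (simp add: y'_def g_def)
      have s1: "reach C 1 (stp C) \<and> st (stp C) = enc (mkSim (st c2) (mem c2) (hd c2) y') \<and> hd (stp C) = 0
         \<and> ext (stp C) = ext C \<and> adr (stp C) = applyop (aop m (st c) g) (adr C) \<and> mem (stp C) 0 = 0"
      proof (rule one_tr[OF _ _ _ _ stC R(1) trv])
        show "Sim (st c, mem c, hd c, y) \<in> Dom" using ic yX by (simp add: BaseDom_def inv_def)
        show "mkSim (st c2) (mem c2) (hd c2) y' \<in> Dom"
          by (rule mkSim_Dom) (use ic2' y'D in \<open>simp_all add: inv_def\<close>)
      qed (simp_all add: zero_gam')
      have rn'1: "rn' (t' + 1) = stp C" using run'_add[of x t' 1] unfolding C_def rn'_def by simp
      have "Rel (Suc t) (rn' (t' + 1))"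
        unfolding Rel_def rn'1 rnS c2_def[symmetric]
      proof (rule exI[of _ y'], rule exI[of _ "Suc j"], intro conjI)
        show "\<forall>i. Suc t - Suc j \<le> i \<longrightarrow> i < Suc t \<longrightarrow> \<not> is_io m (rn i)"
          using R(7) False by (auto simp: c_def less_Suc_eq)
        show "Rj (Suc j) (adr c2) y'"
        proof -
          have "j < Lm" using jP1 P_lt_Lm by simp
          then show ?thesis unfolding c2(4) y'_def by (rule Rj_step[OF R(8)])
        qed
      qed (use s1 R c2 y'X in auto)
      moreover have "\<forall>i<t' + 1. st (rn' i) \<noteq> enc Acc"
        using IH(2) Cacc by (auto simp: less_Suc_eq C_def)
      moreover have nio: "\<not> is_io m' C" using is_io'[OF stC] ic yX by (auto simp: BaseDom_def inv_def)
      moreover have "time_of M 1 m' x (t' + 1) = time_of M 1 m' x t' + 1"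
        "io_of M 1 m' x (t' + 1) = io_of M 1 m' x t'"
        using nio time_Suc[of M 1 m' x t'] io_Suc[of M 1 m' x t'] by (simp_all add: C_def rn'_def)
      moreover have "time_of M B m x (Suc t) = time_of M B m x t + 1" "io_of M B m x (Suc t) = io_of M B m x t"
        using False by (simp_all add: time_Suc io_Suc c_def rn_def)
      ultimately show ?thesis using IH(3,4) by (intro exI[of _ "t' + 1"]) auto
    qed
  qed
  obtain t' where T: "Rel T (rn' t')" "\<forall>i<t'. st (rn' i) \<noteq> enc Acc"
     "time_of M 1 m' x t' \<le> time_of M B m x T + KK * io_of M B m x T"
     "io_of M 1 m' x t' \<le> KK * io_of M B m x T" using claim[of T] by auto
  have "st (rn T) = qacc m" using H by (simp add: halts_at_def rn_def)
  then have "st (rn' t') = qacc m'" "ext (rn' t') = ext (rn T)" using T(1) by (auto simp: Rel_def mkSim_def)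
  then show ?thesis using T by (intro exI[of _ t']) (auto simp: halts_at_def rn'_def rn_def)
qed

end

theorem theorem3:
  fixes \<Sigma> :: "nat set" and M B :: nat and m :: tlm and f :: "nat list \<Rightarrow> nat list"
    and T IO :: "nat \<Rightarrow> real"
  assumes "tlm_bt_computes \<Sigma> M B m f T IO"
  shows "\<exists>m'. tlm_computes \<Sigma> M m' f (\<lambda>n. T n + real B * IO n) (\<lambda>n. real B * IO n)"
proof -
  have A: "0 < B" "B dvd M" "0 < M" "well_formed \<Sigma> m"
    and "\<exists>c N. \<forall>x\<in>lists \<Sigma>. \<exists>t. halts_at M B m x t \<and> output_is (run M B m x t) (f x) \<and>
        (length x \<ge> N \<longrightarrow> real (time_of M B m x t) \<le> c * T (length x)
                        \<and> real (io_of M B m x t) \<le> c * IO (length x))"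
    using assms by (auto simp: tlm_bt_computes_def computes_in_def)
  then obtain c N where H: "\<And>x. x \<in> lists \<Sigma> \<Longrightarrow> \<exists>t. halts_at M B m x t \<and> output_is (run M B m x t) (f x) \<and>
        (length x \<ge> N \<longrightarrow> real (time_of M B m x t) \<le> c * T (length x)
                        \<and> real (io_of M B m x t) \<le> c * IO (length x))" by blast
  interpret L: simloc \<Sigma> M B m by unfold_locales (use A in auto)
  define K where "K = 5 * B + 13 * L.Lm + 5"
  have K1: "1 \<le> real K" by (simp add: K_def)
  have B1: "1 \<le> real B" using A(1) by simp
  have main: "\<exists>t. halts_at M 1 L.m' x t \<and> output_is (run M 1 L.m' x t) (f x) \<and>
        (length x \<ge> N \<longrightarrow> real (time_of M 1 L.m' x t) \<le> (c * real K) * (T (length x) + real B * IO (length x))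
                        \<and> real (io_of M 1 L.m' x t) \<le> (c * real K) * (real B * IO (length x)))"
    if x: "x \<in> lists \<Sigma>" for x
  proof -
    obtain t where t: "halts_at M B m x t" "output_is (run M B m x t) (f x)"
      "length x \<ge> N \<longrightarrow> real (time_of M B m x t) \<le> c * T (length x) \<and> real (io_of M B m x t) \<le> c * IO (length x)"
      using H[OF x] by blast
    obtain t' where t': "halts_at M 1 L.m' x t'" "ext (run M 1 L.m' x t') = ext (run M B m x t)"
      "time_of M 1 L.m' x t' \<le> time_of M B m x t + K * io_of M B m x t"
      "io_of M 1 L.m' x t' \<le> K * io_of M B m x t"
      using L.sim_main[OF x t(1)] unfolding K_def by blast
    have out: "output_is (run M 1 L.m' x t') (f x)" using t(2) t'(2) by (simp add: output_is_def)
    show ?thesis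
    proof (intro exI[of _ t'] conjI impI)
      assume N: "N \<le> length x"
      define tm where "tm = real (time_of M B m x t)"
      define io where "io = real (io_of M B m x t)"
      define TT where "TT = T (length x)"
      define II where "II = IO (length x)"
      have b1: "tm \<le> c * TT" "io \<le> c * II" using t(3) N by (auto simp: tm_def io_def TT_def II_def)
      have pos: "0 \<le> tm" "0 \<le> io" by (auto simp: tm_def io_def)
      have tm': "real (time_of M 1 L.m' x t') \<le> tm + real K * io"
        using t'(3) unfolding tm_def io_def by (metis of_nat_add of_nat_le_iff of_nat_mult)
      have io': "real (io_of M 1 L.m' x t') \<le> real K * io"
        using t'(4) unfolding io_def by (metis of_nat_le_iff of_nat_mult)
      have e1: "tm \<le> real K * tm" using K1 pos(1) mult_right_mono[of 1 "real K" tm] by simp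
      have e2: "io \<le> real B * io" using B1 pos(2) mult_right_mono[of 1 "real B" io] by simp
      have e3: "real K * io \<le> real K * (real B * io)" using e2 K1 by (intro mult_left_mono) auto
      have e4: "real K * tm \<le> real K * (c * TT)" using b1 K1 by (intro mult_left_mono) auto
      have e5: "real K * (real B * io) \<le> real K * (real B * (c * II))"
        using b1 K1 B1 by (intro mult_left_mono) auto
      have eq: "real K * (c * TT) + real K * (real B * (c * II)) = (c * real K) * (TT + real B * II)"
        by (simp add: algebra_simps)
      have eq2: "real K * (real B * (c * II)) = (c * real K) * (real B * II)"
        by (simp add: algebra_simps)
      show "real (time_of M 1 L.m' x t') \<le> (c * real K) * (T (length x) + real B * IO (length x))"
        using tm' e1 e3 e4 e5 eq unfolding TT_def II_def by linarith
      show "real (io_of M 1 L.m' x t') \<le> (c * real K) * (real B * IO (length x))"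
        using io' e3 e5 eq2 unfolding II_def by linarith
    qed (use t' out in auto)
  qed
  have ex: "\<exists>c N. \<forall>x\<in>lists \<Sigma>. \<exists>t. halts_at M 1 L.m' x t \<and> output_is (run M 1 L.m' x t) (f x) \<and>
        (length x \<ge> N \<longrightarrow> real (time_of M 1 L.m' x t) \<le> c * (T (length x) + real B * IO (length x))
                        \<and> real (io_of M 1 L.m' x t) \<le> c * (real B * IO (length x)))"
    by (rule exI[of _ "c * real K"], rule exI[of _ N]) (use main in blast)
  have "computes_in \<Sigma> M 1 L.m' f (\<lambda>n. T n + real B * IO n) (\<lambda>n. real B * IO n)"
    unfolding computes_in_def using A L.wf' ex by simp
  then show ?thesis unfolding tlm_computes_def by blast
qed

end
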